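(* Let $t\ne1$, $u\notin\{0,1,-1\}$ with $V_F(t,\omega(u))>0$, and assume $\mathfrak{g}_{t,u}\in\mathcal{E}(\mathcal{P}_{4,4})$. Then $\mathfrak{g}_{t,u}$ is irreducible in $\mathbb{C}[a,b,c,d]$ and $\mathfrak{g}_{t,u}\notin\Sigma_{4,4}$.
   Context: Variables $a,b,c,d$. Put $s_0=a^4+b^4+c^4+d^4-4abcd$; $s_1=T_{3,1}-12abcd$ with $T_{3,1}=\sum_{i\ne j}x_i^3x_j$; $s_2=\sum_{i<j}x_i^2x_j^2-6abcd$; $s_3=T_{2,1,1}-12abcd$ with $T_{2,1,1}=\sum_i x_i^2\sum_{j<k,\ j,k\ne i}x_jx_k$; $s_4=abcd$ (here $(x_1,x_2,x_3,x_4)=(a,b,c,d)$). Let $\omega(u)=u+\frac1u-2$ and $p^G_0(t,w)=(4t+2)w^2-3(t-1)^2w$, $p^G_1(t,w)=-2(t+1)^2w^2+2(t+1)(t-1)^2w$, $p^G_2(t,w)=4t^2w^2-2(t-1)^2(2t-1)w+2(t-1)^4$, $p^G_3(t,w)=2(t+1)^2w^2-(t-1)^2(t^2+3)w-2(t-1)^4$, $p^G_4(t,w)=2(t-1)^4w^2$, and for $u\ne0$, $\mathfrak{g}_{t,u}=u^2\sum_{i=0}^4p^G_i(t,\omega(u))s_i$. Let $V_F(t,w)=(3+6t-t^2)w^2-6(t-1)^2w$. $\mathcal{P}_{4,4}$ is the cone of real quartic forms in $a,b,c,d$ nonnegative on $\mathbb{R}^4$, $\Sigma_{4,4}$ the cone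 of sums of squares of real quadratic forms; $f\in\mathcal{P}_{4,4}\setminus\{0\}$ is extremal ($f\in\mathcal{E}(\mathcal{P}_{4,4})$) if $f=g+h$ with $g,h\in\mathcal{P}_{4,4}$ forces $g,h\in\mathbb{R}_{\ge0}f$. *)

theory Defs
  imports "HOL-Analysis.Analysis" "HOL-Library.Poly_Mapping" "HOL-Library.Numeral_Type"
begin

text \<open>Polynomials in the four variables a,b,c,d, indexed by the type 4
  (a = 0, b = 1, c = 2, d = 3).  A monomial is an exponent vector
  4 =>0 nat; a polynomial with coefficients in 'a is a finitely supported map from
  monomials to 'a (the monoid ring, with convolution product).  For 'a = complex
  this is exactly the ring C[a,b,c,d].\<close>

type_synonym mono4 = "4 \<Rightarrow>\<^sub>0 nat"

definition Var4 :: "4 \<Rightarrow> (mono4 \<Rightarrow>\<^sub>0 'a::zero_neq_one)" where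
  "Var4 i = Poly_Mapping.single (Poly_Mapping.single i 1) 1"

definition Const4 :: "'a::zero \<Rightarrow> (mono4 \<Rightarrow>\<^sub>0 'a)" where
  "Const4 c = Poly_Mapping.single 0 c"

definition peval4 :: "(mono4 \<Rightarrow>\<^sub>0 real) \<Rightarrow> (4 \<Rightarrow> real) \<Rightarrow> real" where
  "peval4 p x = (\<Sum>m\<in>Poly_Mapping.keys p. Poly_Mapping.lookup p m * (\<Prod>i\<in>UNIV. x i ^ Poly_Mapping.lookup m i))"

text \<open>Homogeneous form of degree k (the zero polynomial counts as a form).\<close>
definition is_form4 :: "nat \<Rightarrow> (mono4 \<Rightarrow>\<^sub>0 real) \<Rightarrow> bool" where
  "is_form4 k p \<longleftrightarrow> (\<forall>m\<in>Poly_Mapping.keys p. (\<Sum>i\<in>UNIV. Poly_Mapping.lookup m i) = k)"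

definition P44 :: "(mono4 \<Rightarrow>\<^sub>0 real) set" where
  "P44 = {p. is_form4 4 p \<and> (\<forall>x. peval4 p x \<ge> 0)}"

definition Sigma44 :: "(mono4 \<Rightarrow>\<^sub>0 real) set" where
  "Sigma44 = {p. \<exists>qs. (\<forall>q\<in>set qs. is_form4 2 q) \<and> p = sum_list (map (\<lambda>q. q * q) qs)}"

definition extremal_P44 :: "(mono4 \<Rightarrow>\<^sub>0 real) \<Rightarrow> bool" where
  "extremal_P44 f \<longleftrightarrow> f \<in> P44 \<and> f \<noteq> 0 \<and>
     (\<forall>g h. g \<in> P44 \<longrightarrow> h \<in> P44 \<longrightarrow> f = g + h \<longrightarrow>
        (\<exists>l\<ge>0. g = Const4 l * f) \<and> (\<exists>m\<ge>0. h = Const4 m * f))"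

definition abcd4 :: "mono4 \<Rightarrow>\<^sub>0 real" where
  "abcd4 = Var4 0 * Var4 1 * Var4 2 * Var4 3"

definition T31 :: "mono4 \<Rightarrow>\<^sub>0 real" where
  "T31 = (\<Sum>(i,j)\<in>{(i,j). i \<noteq> j}. Var4 i ^ 3 * Var4 j)"

definition T22 :: "mono4 \<Rightarrow>\<^sub>0 real" where
  "T22 = (\<Sum>(i,j)\<in>{(i,j). i < j}. Var4 i ^ 2 * Var4 j ^ 2)"

definition T211 :: "mono4 \<Rightarrow>\<^sub>0 real" where
  "T211 = (\<Sum>i\<in>UNIV. Var4 i ^ 2 * (\<Sum>(j,k)\<in>{(j,k). j < k \<and> j \<noteq> i \<and> k \<noteq> i}. Var4 j * Var4 k))"

definition s0 :: "mono4 \<Rightarrow>\<^sub>0 real" where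
  "s0 = (\<Sum>i\<in>UNIV. Var4 i ^ 4) - Const4 4 * abcd4"
definition s1 :: "mono4 \<Rightarrow>\<^sub>0 real" where
  "s1 = T31 - Const4 12 * abcd4"
definition s2 :: "mono4 \<Rightarrow>\<^sub>0 real" where
  "s2 = T22 - Const4 6 * abcd4"
definition s3 :: "mono4 \<Rightarrow>\<^sub>0 real" where
  "s3 = T211 - Const4 12 * abcd4"
definition s4 :: "mono4 \<Rightarrow>\<^sub>0 real" where
  "s4 = abcd4"

definition omega :: "real \<Rightarrow> real" where
  "omega u = u + 1 / u - 2"

definition pG0 :: "real \<Rightarrow> real \<Rightarrow> real" where
  "pG0 t w = (4*t + 2) * w^2 - 3 * (t - 1)^2 * w"
definition pG1 :: "real \<Rightarrow> real \<Rightarrow> real" where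
  "pG1 t w = - 2 * (t + 1)^2 * w^2 + 2 * (t + 1) * (t - 1)^2 * w"
definition pG2 :: "real \<Rightarrow> real \<Rightarrow> real" where
  "pG2 t w = 4 * t^2 * w^2 - 2 * (t - 1)^2 * (2*t - 1) * w + 2 * (t - 1)^4"
definition pG3 :: "real \<Rightarrow> real \<Rightarrow> real" where
  "pG3 t w = 2 * (t + 1)^2 * w^2 - (t - 1)^2 * (t^2 + 3) * w - 2 * (t - 1)^4"
definition pG4 :: "real \<Rightarrow> real \<Rightarrow> real" where
  "pG4 t w = 2 * (t - 1)^4 * w^2"

definition gG :: "real \<Rightarrow> real \<Rightarrow> (mono4 \<Rightarrow>\<^sub>0 real)" where
  "gG t u = Const4 (u^2) *
     (Const4 (pG0 t (omega u)) * s0 + Const4 (pG1 t (omega u)) * s1 + Const4 (pG2 t (omega u)) * s2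
      + Const4 (pG3 t (omega u)) * s3 + Const4 (pG4 t (omega u)) * s4)"

definition VF :: "real \<Rightarrow> real \<Rightarrow> real" where
  "VF t w = (3 + 6*t - t^2) * w^2 - 6 * (t - 1)^2 * w"

definition complexify4 :: "(mono4 \<Rightarrow>\<^sub>0 real) \<Rightarrow> (mono4 \<Rightarrow>\<^sub>0 complex)" where
  "complexify4 p = Poly_Mapping.map complex_of_real p"

end

theory Submission
  imports Defs "HOL-Computational_Algebra.Polynomial"
begin


definition hext :: "('a::zero \<Rightarrow> 'b::comm_ring_1) \<Rightarrow> (mono4 \<Rightarrow> 'b) \<Rightarrow> (mono4 \<Rightarrow>\<^sub>0 'a) \<Rightarrow> 'b" where
  "hext \<psi> \<phi> p = (\<Sum>m\<in>Poly_Mapping.keys p. \<psi> (Poly_Mapping.lookup p m) * \<phi> m)"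

lemma hext_superset:
  assumes "finite S" "Poly_Mapping.keys p \<subseteq> S" "\<psi> 0 = 0"
  shows "hext \<psi> \<phi> p = (\<Sum>m\<in>S. \<psi> (Poly_Mapping.lookup p m) * \<phi> m)"
  unfolding hext_def
  by (rule sum.mono_neutral_left) (use assms in \<open>auto simp: in_keys_iff\<close>)

lemma hext_zero: "hext \<psi> \<phi> 0 = 0"
  by (simp add: hext_def)

lemma hext_add:
  assumes "\<psi> 0 = 0" "\<And>x y. \<psi> (x + y) = \<psi> x + \<psi> y"
  shows "hext \<psi> \<phi> (p + q) = hext \<psi> \<phi> p + hext \<psi> \<phi> q"
proof -
  let ?S = "Poly_Mapping.keys p \<union> Poly_Mapping.keys q"
  have fin: "finite ?S" by simp
  have k: "Poly_Mapping.keys (p+q) \<subseteq> ?S" by (rule keys_add)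
  show ?thesis
    using hext_superset[OF fin k, of \<psi> \<phi>] hext_superset[OF fin _, of p \<psi> \<phi>]
      hext_superset[OF fin _, of q \<psi> \<phi>] assms
    by (simp add: lookup_add distrib_right sum.distrib)
qed

lemma hext_sum:
  assumes "\<psi> 0 = 0" "\<And>x y. \<psi> (x + y) = \<psi> x + \<psi> y"
  shows "hext \<psi> \<phi> (\<Sum>i\<in>I. f i) = (\<Sum>i\<in>I. hext \<psi> \<phi> (f i))"
proof (cases "finite I")
  case True thus ?thesis
    by (induction I rule: finite_induct) (simp_all add: hext_zero hext_add[OF assms])
qed (simp add: hext_zero)

lemma hext_single:
  assumes "\<psi> 0 = 0"
  shows "hext \<psi> \<phi> (Poly_Mapping.single m c) = \<psi> c * \<phi> m"
  using assms by (cases "c = 0") (simp_all add: hext_def)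

lemma pm_decomp:
  "p = (\<Sum>m\<in>Poly_Mapping.keys p. Poly_Mapping.single m (Poly_Mapping.lookup p m))"
proof (rule poly_mapping_eqI)
  fix k
  show "Poly_Mapping.lookup p k = Poly_Mapping.lookup (\<Sum>m\<in>Poly_Mapping.keys p. Poly_Mapping.single m (Poly_Mapping.lookup p m)) k"
    by (simp add: lookup_sum lookup_single when_def in_keys_iff)
qed

lemma hext_mult:
  fixes \<psi> :: "'a::comm_ring_1 \<Rightarrow> 'b::comm_ring_1"
  assumes z: "\<psi> 0 = 0" and a: "\<And>x y. \<psi> (x + y) = \<psi> x + \<psi> y"
    and m: "\<And>x y. \<psi> (x * y) = \<psi> x * \<psi> y"
    and pm: "\<And>m m'. \<phi> (m + m') = \<phi> m * \<phi> m'"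
  shows "hext \<psi> \<phi> (p * q) = hext \<psi> \<phi> p * hext \<psi> \<phi> q"
proof -
  have "p * q = (\<Sum>m\<in>Poly_Mapping.keys p. Poly_Mapping.single m (Poly_Mapping.lookup p m)) *
      (\<Sum>m'\<in>Poly_Mapping.keys q. Poly_Mapping.single m' (Poly_Mapping.lookup q m'))"
    using pm_decomp[of p] pm_decomp[of q] by simp
  also have "\<dots> = (\<Sum>m\<in>Poly_Mapping.keys p. \<Sum>m'\<in>Poly_Mapping.keys q.
      Poly_Mapping.single (m + m') (Poly_Mapping.lookup p m * Poly_Mapping.lookup q m'))"
    by (simp add: sum_product mult_single)
  finally have "hext \<psi> \<phi> (p * q) = (\<Sum>m\<in>Poly_Mapping.keys p. \<Sum>m'\<in>Poly_Mapping.keys q.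
      \<psi> (Poly_Mapping.lookup p m) * \<phi> m * (\<psi> (Poly_Mapping.lookup q m') * \<phi> m'))"
    by (simp add: hext_sum[of \<psi>, OF z a] hext_single[of \<psi>, OF z] m pm mult_ac)
  also have "\<dots> = hext \<psi> \<phi> p * hext \<psi> \<phi> q"
    by (simp add: hext_def sum_product)
  finally show ?thesis .
qed



definition meval :: "(4 \<Rightarrow> 'b::comm_ring_1) \<Rightarrow> mono4 \<Rightarrow> 'b" where
  "meval z m = (\<Prod>i\<in>UNIV. z i ^ Poly_Mapping.lookup m i)"

lemma meval_add: "meval z (m + m') = meval z m * meval z m'"
  by (simp add: meval_def lookup_add power_add prod.distrib)

lemma meval_0: "meval z 0 = 1"
  by (simp add: meval_def)

lemma meval_var: "meval z (Poly_Mapping.single i 1) = z i"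
proof -
  have "meval z (Poly_Mapping.single i 1) = (\<Prod>j\<in>UNIV. if i = j then z j else 1)"
    unfolding meval_def by (rule prod.cong) (auto simp: lookup_single when_def)
  also have "\<dots> = z i" by simp
  finally show ?thesis .
qed

definition cev :: "(mono4 \<Rightarrow>\<^sub>0 real) \<Rightarrow> (4 \<Rightarrow> complex) \<Rightarrow> complex" where
  "cev p z = hext of_real (meval z) p"

definition cpev :: "(mono4 \<Rightarrow>\<^sub>0 complex) \<Rightarrow> (4 \<Rightarrow> complex) \<Rightarrow> complex" where
  "cpev p z = hext id (meval z) p"

lemma cev_add: "cev (p + q) z = cev p z + cev q z"
  unfolding cev_def by (rule hext_add) simp_all

lemma cev_mult: "cev (p * q) z = cev p z * cev q z"
  unfolding cev_def by (rule hext_mult) (simp_all add: meval_add)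

lemma cev_sum: "cev (\<Sum>i\<in>I. f i) z = (\<Sum>i\<in>I. cev (f i) z)"
  unfolding cev_def by (rule hext_sum) simp_all

lemma cev_diff: "cev (p - q) z = cev p z - cev q z"
  using cev_add[of "p - q" q z] by simp

lemma cev_single: "cev (Poly_Mapping.single m c) z = of_real c * meval z m"
  unfolding cev_def by (rule hext_single) simp

lemma cev_Var: "cev (Var4 i) z = z i"
  using meval_var[of z i] by (simp add: Var4_def cev_single)

lemma cev_Const: "cev (Const4 c) z = of_real c"
  by (simp add: Const4_def cev_single meval_0)

lemma cev_one: "cev 1 z = 1"
  by (simp add: cev_single meval_0 flip: single_one)

lemma cev_power: "cev (p ^ n) z = cev p z ^ n"
  by (induction n) (simp_all add: cev_mult cev_one)

lemma cpev_add: "cpev (p + q) z = cpev p z + cpev q z"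
  unfolding cpev_def by (rule hext_add) simp_all

lemma cpev_mult: "cpev (p * q) z = cpev p z * cpev q z"
  unfolding cpev_def by (rule hext_mult) (simp_all add: meval_add)

lemma keys_complexify: "Poly_Mapping.keys (complexify4 p) = Poly_Mapping.keys p"
  by (auto simp: complexify4_def in_keys_iff Poly_Mapping.map.rep_eq when_def)

lemma lookup_complexify: "Poly_Mapping.lookup (complexify4 p) m = of_real (Poly_Mapping.lookup p m)"
  by (auto simp: complexify4_def Poly_Mapping.map.rep_eq when_def)

lemma cpev_complexify: "cpev (complexify4 p) z = cev p z"
  by (simp add: cpev_def cev_def hext_def keys_complexify lookup_complexify)

lemma complexify_hext: "complexify4 p = hext (\<lambda>c. Poly_Mapping.single 0 (complex_of_real c)) (\<lambda>m. Poly_Mapping.single m 1) p"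
proof -
  have "complexify4 p = (\<Sum>m\<in>Poly_Mapping.keys (complexify4 p). Poly_Mapping.single m (Poly_Mapping.lookup (complexify4 p) m))"
    by (rule pm_decomp)
  also have "\<dots> = hext (\<lambda>c. Poly_Mapping.single 0 (complex_of_real c)) (\<lambda>m. Poly_Mapping.single m 1) p"
    by (simp add: hext_def keys_complexify lookup_complexify mult_single)
  finally show ?thesis .
qed

lemma complexify_mult: "complexify4 (p * q) = complexify4 p * complexify4 q"
  unfolding complexify_hext
  by (rule hext_mult) (simp_all add: single_add mult_single)


lemma sum_UNIV4: "(\<Sum>i\<in>(UNIV::4 set). g i) = g 0 + g 1 + g 2 + g 3"
proof -
  have "(4::4) = 0" by simp
  then have "g (4::4) = g 0" by (rule arg_cong)
  then show ?thesis by (simp only: sum_4) (simp add: ac_simps)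
qed

lemma sum_pairs: "(\<Sum>(i,j)\<in>{(i::4,j::4). Q i j}. g i j) = (\<Sum>i\<in>UNIV. \<Sum>j\<in>UNIV. if Q i j then g i j else 0)"
proof -
  have "{(i::4,j::4). Q i j} = {x \<in> UNIV. Q (fst x) (snd x)}" by auto
  then have "(\<Sum>(i,j)\<in>{(i::4,j::4). Q i j}. g i j) = (\<Sum>x\<in>UNIV. if Q (fst x) (snd x) then g (fst x) (snd x) else 0)"
    by (subst sum.inter_filter[symmetric]) (simp_all add: split_def)
  also have "\<dots> = (\<Sum>i\<in>UNIV. \<Sum>j\<in>UNIV. if Q i j then g i j else 0)"
    by (simp only: UNIV_Times_UNIV[symmetric] sum.cartesian_product split_def)
  finally show ?thesis .
qed

definition sg0 :: "'a::comm_ring_1 \<Rightarrow> 'a \<Rightarrow> 'a \<Rightarrow> 'a \<Rightarrow> 'a" where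
  "sg0 a b c d = a^4 + b^4 + c^4 + d^4 - 4*a*b*c*d"
definition sg1 :: "'a::comm_ring_1 \<Rightarrow> 'a \<Rightarrow> 'a \<Rightarrow> 'a \<Rightarrow> 'a" where
  "sg1 a b c d = a^3*b + a^3*c + a^3*d + b^3*a + b^3*c + b^3*d + c^3*a + c^3*b + c^3*d + d^3*a + d^3*b + d^3*c - 12*a*b*c*d"
definition sg2 :: "'a::comm_ring_1 \<Rightarrow> 'a \<Rightarrow> 'a \<Rightarrow> 'a \<Rightarrow> 'a" where
  "sg2 a b c d = a^2*b^2 + a^2*c^2 + a^2*d^2 + b^2*c^2 + b^2*d^2 + c^2*d^2 - 6*a*b*c*d"
definition sg3 :: "'a::comm_ring_1 \<Rightarrow> 'a \<Rightarrow> 'a \<Rightarrow> 'a \<Rightarrow> 'a" where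
  "sg3 a b c d = a^2*(b*c + b*d + c*d) + b^2*(a*c + a*d + c*d) + c^2*(a*b + a*d + b*d) + d^2*(a*b + a*c + b*c) - 12*a*b*c*d"
definition sg4 :: "'a::comm_ring_1 \<Rightarrow> 'a \<Rightarrow> 'a \<Rightarrow> 'a \<Rightarrow> 'a" where
  "sg4 a b c d = a*b*c*d"

lemma lt4: "(0::4) < 1 \<and> (0::4) < 2 \<and> (0::4) < 3 \<and> (1::4) < 2 \<and> (1::4) < 3 \<and> (2::4) < 3"
  by (simp add: less_bit0_def bit0.Rep_numeral bit0.Rep_0 bit0.Rep_1)

lemma nlt4: "\<not> (1::4) < 0 \<and> \<not> (2::4) < 0 \<and> \<not> (3::4) < 0 \<and> \<not> (2::4) < 1 \<and> \<not> (3::4) < 1 \<and> \<not> (3::4) < 2"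
  using lt4 by (meson not_less_iff_gr_or_eq order.asym)

lemma T31_eq: "T31 = (\<Sum>i\<in>UNIV. \<Sum>j\<in>UNIV. if i \<noteq> j then Var4 i ^ 3 * Var4 j else 0)"
  unfolding T31_def by (rule sum_pairs)
lemma T22_eq: "T22 = (\<Sum>i\<in>UNIV. \<Sum>j\<in>UNIV. if i < j then Var4 i ^ 2 * Var4 j ^ 2 else 0)"
  unfolding T22_def by (rule sum_pairs)
lemma T211_eq: "T211 = (\<Sum>i\<in>UNIV. Var4 i ^ 2 * (\<Sum>j\<in>UNIV. \<Sum>k\<in>UNIV. if j < k \<and> j \<noteq> i \<and> k \<noteq> i then Var4 j * Var4 k else 0))"
  unfolding T211_def by (simp only: sum_pairs)

lemma cev_abcd: "cev abcd4 z = z 0 * z 1 * z 2 * z 3"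
  by (simp add: abcd4_def cev_mult cev_Var)

lemma cev_if: "cev (if P then p else q) z = (if P then cev p z else cev q z)"
  by simp
lemma cev_0: "cev 0 z = 0"
  by (simp add: cev_def hext_zero)

lemmas cev_simps = cev_add cev_diff cev_mult cev_sum cev_power cev_Var cev_Const cev_abcd cev_if cev_0

lemma cev_s0: "cev s0 z = sg0 (z 0) (z 1) (z 2) (z 3)"
  by (simp add: s0_def sg0_def cev_simps sum_UNIV4 mult_ac)
lemma cev_s1: "cev s1 z = sg1 (z 0) (z 1) (z 2) (z 3)"
  by (simp add: s1_def T31_eq sg1_def cev_simps sum_UNIV4 mult_ac add_ac)
lemma cev_s2: "cev s2 z = sg2 (z 0) (z 1) (z 2) (z 3)"
  by (simp add: s2_def T22_eq sg2_def cev_simps sum_UNIV4 lt4 nlt4 mult_ac add_ac)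
lemma cev_s3: "cev s3 z = sg3 (z 0) (z 1) (z 2) (z 3)"
  by (simp add: s3_def T211_eq sg3_def cev_simps sum_UNIV4 lt4 nlt4 mult_ac add_ac distrib_left)
lemma cev_s4: "cev s4 z = sg4 (z 0) (z 1) (z 2) (z 3)"
  by (simp add: s4_def sg4_def cev_abcd)
definition C0 :: "'a::comm_ring_1 \<Rightarrow> 'a \<Rightarrow> 'a" where
  "C0 t u = (4*t + 2)*(u-1)^4 - 3*(t-1)^2*u*(u-1)^2"
definition C1 :: "'a::comm_ring_1 \<Rightarrow> 'a \<Rightarrow> 'a" where
  "C1 t u = - 2*(t+1)^2*(u-1)^4 + 2*(t+1)*(t-1)^2*u*(u-1)^2"
definition C2 :: "'a::comm_ring_1 \<Rightarrow> 'a \<Rightarrow> 'a" where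
  "C2 t u = 4*t^2*(u-1)^4 - 2*(t-1)^2*(2*t-1)*u*(u-1)^2 + 2*(t-1)^4*u^2"
definition C3 :: "'a::comm_ring_1 \<Rightarrow> 'a \<Rightarrow> 'a" where
  "C3 t u = 2*(t+1)^2*(u-1)^4 - (t-1)^2*(t^2+3)*u*(u-1)^2 - 2*(t-1)^4*u^2"
definition C4 :: "'a::comm_ring_1 \<Rightarrow> 'a \<Rightarrow> 'a" where
  "C4 t u = 2*(t-1)^4*(u-1)^4"

definition FF :: "'a::comm_ring_1 \<Rightarrow> 'a \<Rightarrow> 'a \<Rightarrow> 'a \<Rightarrow> 'a \<Rightarrow> 'a \<Rightarrow> 'a" where
  "FF t u a b c d = C0 t u * sg0 a b c d + C1 t u * sg1 a b c d + C2 t u * sg2 a b c d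
     + C3 t u * sg3 a b c d + C4 t u * sg4 a b c d"

lemma uomega: "(u::real) \<noteq> 0 \<Longrightarrow> u * omega u = (u - 1)^2"
  by (simp add: omega_def field_simps power2_eq_square)

lemma pG_C_w:
  fixes u w t :: real
  assumes w: "u * w = (u - 1)^2"
  shows "u^2 * pG0 t w = C0 t u" "u^2 * pG1 t w = C1 t u"
    "u^2 * pG2 t w = C2 t u" "u^2 * pG3 t w = C3 t u"
    "u^2 * pG4 t w = C4 t u"
  using w unfolding pG0_def C0_def pG1_def C1_def pG2_def C2_def pG3_def C3_def pG4_def C4_def
  by algebra+

lemmas pG_C = pG_C_w[OF uomega]

lemma of_real_C:
  "complex_of_real (C0 t u) = C0 (of_real t) (of_real u)"
  "complex_of_real (C1 t u) = C1 (of_real t) (of_real u)"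
  "complex_of_real (C2 t u) = C2 (of_real t) (of_real u)"
  "complex_of_real (C3 t u) = C3 (of_real t) (of_real u)"
  "complex_of_real (C4 t u) = C4 (of_real t) (of_real u)"
  by (simp_all add: C0_def C1_def C2_def C3_def C4_def)

lemma cev_gG:
  assumes "u \<noteq> 0"
  shows "cev (gG t u) z = FF (complex_of_real t) (complex_of_real u) (z 0) (z 1) (z 2) (z 3)"
proof -
  have "cev (gG t u) z = of_real (u^2 * pG0 t (omega u)) * sg0 (z 0) (z 1) (z 2) (z 3)
     + of_real (u^2 * pG1 t (omega u)) * sg1 (z 0) (z 1) (z 2) (z 3)
     + of_real (u^2 * pG2 t (omega u)) * sg2 (z 0) (z 1) (z 2) (z 3)
     + of_real (u^2 * pG3 t (omega u)) * sg3 (z 0) (z 1) (z 2) (z 3)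
     + of_real (u^2 * pG4 t (omega u)) * sg4 (z 0) (z 1) (z 2) (z 3)"
  proof -
    have "cev (gG t u) z = of_real (u^2) * (of_real (pG0 t (omega u)) * sg0 (z 0) (z 1) (z 2) (z 3)
     + of_real (pG1 t (omega u)) * sg1 (z 0) (z 1) (z 2) (z 3)
     + of_real (pG2 t (omega u)) * sg2 (z 0) (z 1) (z 2) (z 3)
     + of_real (pG3 t (omega u)) * sg3 (z 0) (z 1) (z 2) (z 3)
     + of_real (pG4 t (omega u)) * sg4 (z 0) (z 1) (z 2) (z 3))"
      by (simp add: gG_def cev_simps cev_s0 cev_s1 cev_s2 cev_s3 cev_s4 del: of_real_power)
    then show ?thesis by (simp add: algebra_simps)
  qed
  then show ?thesis
    by (simp only: pG_C[OF assms] of_real_C FF_def)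
qed


definition lphi :: "(4 \<Rightarrow> complex) \<Rightarrow> (4 \<Rightarrow> complex) \<Rightarrow> mono4 \<Rightarrow> complex poly" where
  "lphi x y m = (\<Prod>i\<in>UNIV. [:x i, y i:] ^ Poly_Mapping.lookup m i)"

definition lpoly :: "(mono4 \<Rightarrow>\<^sub>0 complex) \<Rightarrow> (4 \<Rightarrow> complex) \<Rightarrow> (4 \<Rightarrow> complex) \<Rightarrow> complex poly" where
  "lpoly a x y = hext (\<lambda>c. [:c:]) (lphi x y) a"

lemma poly_lpoly: "poly (lpoly a x y) e = cpev a (\<lambda>i. x i + e * y i)"
  by (simp add: lpoly_def lphi_def hext_def cpev_def meval_def poly_sum poly_prod poly_power algebra_simps)

lemma lpoly_mult: "lpoly (a * b) x y = lpoly a x y * lpoly b x y"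
  unfolding lpoly_def
  by (rule hext_mult) (simp_all add: lphi_def lookup_add power_add prod.distrib)

lemma coeff0_lpoly: "coeff (lpoly a x y) 0 = cpev a x"
  using poly_lpoly[of a x y 0] by (simp add: poly_0_coeff_0)

lemma coeff_lpoly: "coeff (lpoly a x y) n = (\<Sum>m\<in>Poly_Mapping.keys a. Poly_Mapping.lookup a m * coeff (lphi x y m) n)"
  by (simp add: lpoly_def hext_def coeff_sum)

lemma coeff_lin_pow:
  "coeff ([:a, b:] ^ k) 0 = a ^ k \<and> coeff ([:a, b:] ^ k) 1 = of_nat k * a ^ (k - 1) * b"
proof (induction k)
  case 0 then show ?case by simp
next
  case (Suc k)
  have c1: "coeff ([:a, b:] ^ Suc k) 1 = a * coeff ([:a, b:] ^ k) 1 + b * coeff ([:a, b:] ^ k) 0"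
    by (simp add: coeff_mult)
  have c0: "coeff ([:a, b:] ^ Suc k) 0 = a * coeff ([:a, b:] ^ k) 0"
    by (simp add: coeff_mult)
  show ?case using Suc c0 c1 by (cases k) (simp_all add: algebra_simps)
qed

lemma coeff_lin_pow1: "coeff ([:a, b:] ^ k) (Suc 0) = of_nat k * a ^ (k - 1) * b"
  using coeff_lin_pow[of a b k] by simp

lemma coeff0_prod: "coeff (\<Prod>i\<in>S. P i) 0 = (\<Prod>i\<in>S. coeff (P i) 0)"
  by (simp add: poly_0_coeff_0[symmetric] poly_prod)

lemma coeff1_prod:
  assumes "finite S"
  shows "coeff (\<Prod>i\<in>S. P i) 1 = (\<Sum>i\<in>S. coeff (P i) 1 * (\<Prod>j\<in>S - {i}. coeff (P j) 0))"
  using assms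
proof (induction S rule: finite_induct)
  case empty then show ?case by simp
next
  case (insert x S)
  have "coeff (\<Prod>i\<in>insert x S. P i) 1 = coeff (P x * (\<Prod>i\<in>S. P i)) 1"
    using insert by simp
  also have "\<dots> = coeff (P x) 0 * coeff (\<Prod>i\<in>S. P i) 1 + coeff (P x) 1 * coeff (\<Prod>i\<in>S. P i) 0"
    by (simp add: coeff_mult)
  also have "\<dots> = coeff (P x) 0 * (\<Sum>i\<in>S. coeff (P i) 1 * (\<Prod>j\<in>S - {i}. coeff (P j) 0))
      + coeff (P x) 1 * (\<Prod>j\<in>S. coeff (P j) 0)"
    using insert by (simp add: coeff0_prod)
  also have "\<dots> = (\<Sum>i\<in>insert x S. coeff (P i) 1 * (\<Prod>j\<in>insert x S - {i}. coeff (P j) 0))"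
  proof -
    have "(\<Prod>j\<in>insert x S - {i}. coeff (P j) 0) = coeff (P x) 0 * (\<Prod>j\<in>S - {i}. coeff (P j) 0)"
      if "i \<in> S" for i
    proof -
      have "insert x S - {i} = insert x (S - {i})" using that insert by auto
      then show ?thesis using insert by simp
    qed
    moreover have "insert x S - {x} = S" using insert by auto
    ultimately show ?thesis using insert
      by (simp add: sum_distrib_left algebra_simps)
  qed
  finally show ?case .
qed

lemma coeff1_lphi:
  "coeff (lphi x y m) 1 = (\<Sum>i\<in>UNIV. of_nat (Poly_Mapping.lookup m i) * x i ^ (Poly_Mapping.lookup m i - 1) * y i *
      (\<Prod>j\<in>UNIV - {i}. x j ^ Poly_Mapping.lookup m j))"
  unfolding lphi_def by (subst coeff1_prod) (simp_all add: coeff_lin_pow coeff_lin_pow1)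

lemma coeff1_lpoly_add:
  "coeff (lpoly a x (\<lambda>i. y i + y' i)) 1 = coeff (lpoly a x y) 1 + coeff (lpoly a x y') 1"
  by (simp only: coeff_lpoly coeff1_lphi) (simp add: algebra_simps sum.distrib sum_distrib_left)

definition hom4 :: "nat \<Rightarrow> (mono4 \<Rightarrow>\<^sub>0 complex) \<Rightarrow> bool" where
  "hom4 k a \<longleftrightarrow> (\<forall>m\<in>Poly_Mapping.keys a. (\<Sum>i\<in>UNIV. Poly_Mapping.lookup m i) = k)"

lemma degree_lpoly:
  assumes "hom4 k a"
  shows "degree (lpoly a x y) \<le> k"
  unfolding lpoly_def hext_def
proof (rule degree_sum_le)
  fix m assume m: "m \<in> Poly_Mapping.keys a"
  have "degree ([:Poly_Mapping.lookup a m:] * lphi x y m) \<le> degree (lphi x y m)"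
    by (metis add_0 degree_mult_le degree_pCons_0)
  also have "\<dots> \<le> (\<Sum>i\<in>UNIV. degree ([:x i, y i:] ^ Poly_Mapping.lookup m i))"
    unfolding lphi_def using degree_prod_sum_le[of UNIV "\<lambda>i. [:x i, y i:] ^ Poly_Mapping.lookup m i"] by simp
  also have "\<dots> \<le> (\<Sum>i\<in>UNIV. Poly_Mapping.lookup m i)"
  proof (rule sum_mono)
    fix i
    have "degree ([:x i, y i:] ^ Poly_Mapping.lookup m i) \<le> Poly_Mapping.lookup m i * degree [:x i, y i:]"
      by (metis degree_power_le mult.commute)
    also have "\<dots> \<le> Poly_Mapping.lookup m i" by simp
    finally show "degree ([:x i, y i:] ^ Poly_Mapping.lookup m i) \<le> Poly_Mapping.lookup m i" .
  qed
  also have "\<dots> = k" using assms m by (simp add: hom4_def)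
  finally show "degree ([:Poly_Mapping.lookup a m:] * lphi x y m) \<le> k" .
qed simp

lemma cpev_scale:
  assumes "hom4 k a"
  shows "cpev a (\<lambda>i. c * z i) = c ^ k * cpev a z"
proof -
  have "meval (\<lambda>i. c * z i) m = c ^ k * meval z m" if "m \<in> Poly_Mapping.keys a" for m
  proof -
    have "meval (\<lambda>i. c * z i) m = (\<Prod>i\<in>UNIV. c ^ Poly_Mapping.lookup m i) * meval z m"
      by (simp add: meval_def power_mult_distrib prod.distrib)
    also have "(\<Prod>i\<in>UNIV. c ^ Poly_Mapping.lookup m i) = c ^ k"
      using assms that by (simp add: hom4_def power_sum[symmetric])
    finally show ?thesis .
  qed
  then show ?thesis
    by (simp add: cpev_def hext_def sum_distrib_left algebra_simps)
qed



definition mdeg :: "mono4 \<Rightarrow> nat" where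
  "mdeg m = (\<Sum>i\<in>UNIV. Poly_Mapping.lookup m i)"

definition theta :: "(mono4 \<Rightarrow>\<^sub>0 complex) \<Rightarrow> (mono4 \<Rightarrow>\<^sub>0 complex) poly" where
  "theta a = hext (\<lambda>c. [:Poly_Mapping.single 0 c:]) (\<lambda>m. monom (Poly_Mapping.single m 1) (mdeg m)) a"

lemma mdeg_add: "mdeg (m + m') = mdeg m + mdeg m'"
  by (simp add: mdeg_def lookup_add sum.distrib)

lemma theta_mult: "theta (a * b) = theta a * theta b"
  unfolding theta_def
  by (rule hext_mult) (simp_all add: single_add mult_single mult_to_poly mult_monom mdeg_add mult.commute)

lemma coeff_theta_lookup:
  "Poly_Mapping.lookup (coeff (theta a) j) m0 = (if mdeg m0 = j then Poly_Mapping.lookup a m0 else 0)"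
proof -
  have "coeff (theta a) j = (\<Sum>m\<in>Poly_Mapping.keys a. if mdeg m = j then Poly_Mapping.single m (Poly_Mapping.lookup a m) else 0)"
    unfolding theta_def hext_def coeff_sum
    by (intro sum.cong refl) (auto simp: mult_single)
  then have "Poly_Mapping.lookup (coeff (theta a) j) m0 = (\<Sum>m\<in>Poly_Mapping.keys a. Poly_Mapping.lookup (if mdeg m = j then Poly_Mapping.single m (Poly_Mapping.lookup a m) else 0) m0)"
    by (simp only: lookup_sum)
  also have "\<dots> = (\<Sum>m\<in>Poly_Mapping.keys a. if m0 = m then (if mdeg m0 = j then Poly_Mapping.lookup a m0 else 0) else 0)"
    by (rule sum.cong) (auto simp: lookup_single when_def)
  also have "\<dots> = (if mdeg m0 = j then Poly_Mapping.lookup a m0 else 0)"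
    by (simp add: in_keys_iff)
  finally show ?thesis .
qed

lemma hom4_iff_mdeg: "hom4 k a \<longleftrightarrow> (\<forall>m\<in>Poly_Mapping.keys a. mdeg m = k)"
  by (simp add: hom4_def mdeg_def)

lemma theta_hom:
  assumes "hom4 d F"
  shows "theta F = monom F d"
proof (rule poly_eqI)
  fix j
  show "coeff (theta F) j = coeff (monom F d) j"
  proof (rule poly_mapping_eqI)
    fix m
    show "Poly_Mapping.lookup (coeff (theta F) j) m = Poly_Mapping.lookup (coeff (monom F d) j) m"
      using assms by (auto simp: coeff_theta_lookup coeff_monom hom4_iff_mdeg in_keys_iff)
  qed
qed

lemma theta_coeff_zero_hom:
  assumes "\<And>j. j \<noteq> k \<Longrightarrow> coeff (theta a) j = 0"
  shows "hom4 k a"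
  unfolding hom4_iff_mdeg
proof
  fix m assume m: "m \<in> Poly_Mapping.keys a"
  have "Poly_Mapping.lookup (coeff (theta a) (mdeg m)) m = Poly_Mapping.lookup a m"
    by (simp add: coeff_theta_lookup)
  then have "coeff (theta a) (mdeg m) \<noteq> 0" using m by (auto simp: in_keys_iff)
  then show "mdeg m = k" using assms by blast
qed

lemma poly_monomial_factors:
  fixes A B :: "'a::idom poly"
  assumes AB: "A * B = monom c d" and c: "c \<noteq> 0"
  shows "\<forall>j. j \<noteq> degree A \<longrightarrow> coeff A j = 0"
proof -
  have A0: "A \<noteq> 0" and B0: "B \<noteq> 0" using AB c by auto
  have degs: "degree A + degree B = d"
    using AB c A0 B0 by (metis degree_monom_eq degree_mult_eq)
  obtain i0 where i0: "coeff A i0 \<noteq> 0" "\<And>i. i < i0 \<Longrightarrow> coeff A i = 0"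
  proof -
    have ex: "\<exists>i. coeff A i \<noteq> 0" using A0 leading_coeff_neq_0 by blast
    show ?thesis
      by (rule that[of "LEAST i. coeff A i \<noteq> 0"]) (use LeastI_ex[OF ex] not_less_Least in auto)
  qed
  obtain j0 where j0: "coeff B j0 \<noteq> 0" "\<And>i. i < j0 \<Longrightarrow> coeff B i = 0"
  proof -
    have ex: "\<exists>i. coeff B i \<noteq> 0" using B0 leading_coeff_neq_0 by blast
    show ?thesis
      by (rule that[of "LEAST i. coeff B i \<noteq> 0"]) (use LeastI_ex[OF ex] not_less_Least in auto)
  qed
  have "coeff (A * B) (i0 + j0) = (\<Sum>i\<le>i0 + j0. coeff A i * coeff B (i0 + j0 - i))"
    by (rule coeff_mult)
  also have "\<dots> = coeff A i0 * coeff B j0"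
  proof (rule trans[OF sum.remove[of _ i0]])
    have "coeff A i * coeff B (i0 + j0 - i) = 0" if "i \<in> {..i0+j0} - {i0}" for i
    proof (cases "i < i0")
      case True then show ?thesis using i0 by simp
    next
      case False then have "i0 + j0 - i < j0" using that by auto
      then show ?thesis using j0 by simp
    qed
    then have "(\<Sum>i\<in>{..i0 + j0} - {i0}. coeff A i * coeff B (i0 + j0 - i)) = 0"
      by (intro sum.neutral) blast
    then show "coeff A i0 * coeff B (i0 + j0 - i0) + (\<Sum>i\<in>{..i0 + j0} - {i0}. coeff A i * coeff B (i0 + j0 - i)) =
        coeff A i0 * coeff B j0" by simp
  qed simp_all
  finally have "coeff (A * B) (i0 + j0) \<noteq> 0" using i0 j0 by simp
  then have "i0 + j0 = d" using AB by (auto simp: coeff_monom split: if_splits)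
  moreover have "i0 \<le> degree A" using i0 by (simp add: le_degree)
  moreover have "j0 \<le> degree B" using j0 by (simp add: le_degree)
  ultimately have "i0 = degree A" using degs by linarith
  then show ?thesis using i0 by (metis coeff_eq_0 linorder_neqE_nat)
qed

lemma factor_hom:
  assumes F: "a * b = F" "F \<noteq> 0" "hom4 d F"
  shows "\<exists>k\<le>d. hom4 k a \<and> hom4 (d - k) b"
proof -
  have AB: "theta a * theta b = monom F d" using F theta_mult theta_hom by metis
  have BA: "theta b * theta a = monom F d" using AB by (simp add: mult.commute)
  have A0: "theta a \<noteq> 0" "theta b \<noteq> 0" using AB F(2) by auto
  have degs: "degree (theta a) + degree (theta b) = d"
    using AB F(2) A0 by (metis degree_monom_eq degree_mult_eq)
  have ha: "hom4 (degree (theta a)) a"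
    using poly_monomial_factors[OF AB F(2)] by (intro theta_coeff_zero_hom) auto
  have hb: "hom4 (degree (theta b)) b"
    using poly_monomial_factors[OF BA F(2)] by (intro theta_coeff_zero_hom) auto
  show ?thesis using ha hb degs by (intro exI[of _ "degree (theta a)"]) auto
qed

lemma hom0_unit:
  assumes "hom4 0 a" "a \<noteq> 0"
  shows "a dvd 1"
proof -
  have k: "Poly_Mapping.keys a \<subseteq> {0}"
  proof
    fix m assume m: "m \<in> Poly_Mapping.keys a"
    then have "mdeg m = 0" using assms by (simp add: hom4_iff_mdeg)
    then have "\<forall>i. Poly_Mapping.lookup m i = 0" by (simp add: mdeg_def)
    then show "m \<in> {0}" by (simp add: poly_mapping_eqI)
  qed
  have "a = (\<Sum>m\<in>Poly_Mapping.keys a. Poly_Mapping.single m (Poly_Mapping.lookup a m))"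
    by (rule pm_decomp)
  also have "\<dots> = Poly_Mapping.single 0 (Poly_Mapping.lookup a 0)"
  proof -
    have "Poly_Mapping.keys a = {0}" using k assms(2) by (metis keys_eq_empty subset_singletonD)
    then show ?thesis by simp
  qed
  finally have a: "a = Poly_Mapping.single 0 (Poly_Mapping.lookup a 0)" .
  have c: "Poly_Mapping.lookup a 0 \<noteq> 0" using a assms(2) by (metis single_zero)
  have "a * Poly_Mapping.single 0 (1 / Poly_Mapping.lookup a 0) = 1"
    using c by (subst a) (simp add: mult_single)
  then show ?thesis by (metis dvdI)
qed



definition mk4 :: "'a \<Rightarrow> 'a \<Rightarrow> 'a \<Rightarrow> 'a \<Rightarrow> 4 \<Rightarrow> 'a" where
  "mk4 a b c d = (\<lambda>i. if i = 0 then a else if i = 1 then b else if i = 2 then c else d)"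

lemma mk4_simps [simp]: "mk4 a b c d 0 = a" "mk4 a b c d 1 = b" "mk4 a b c d 2 = c" "mk4 a b c d 3 = d"
  by (simp_all add: mk4_def)

definition VV :: "'a::comm_ring_1 \<Rightarrow> 'a \<Rightarrow> 'a" where
  "VV t u = (3 + 6*t - t^2)*(u-1)^2 - 6*(t-1)^2*u"

lemma lpoly_f:
  assumes "u \<noteq> 0"
  shows "poly (lpoly (complexify4 (gG t u)) x y) e
    = FF (complex_of_real t) (complex_of_real u) (x 0 + e * y 0) (x 1 + e * y 1) (x 2 + e * y 2) (x 3 + e * y 3)"
  by (simp add: poly_lpoly cpev_complexify cev_gG[OF assms])

lemma lpoly_f_eq:
  assumes "u \<noteq> 0"
    and "\<And>e. FF (complex_of_real t) (complex_of_real u) (x 0 + e * y 0) (x 1 + e * y 1) (x 2 + e * y 2) (x 3 + e * y 3) = poly Q e"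
  shows "lpoly (complexify4 (gG t u)) x y = Q"
  using assms by (simp add: lpoly_f poly_eq_poly_eq_iff[symmetric] fun_eq_iff del: poly_eq_poly_eq_iff)



lemma ff_P1_1: fixes T U e :: complex
  shows "FF T U (1 + e * (1)) (1 + e * (-1)) (U + e * (0)) (U + e * (0)) = poly [:0, 0, 2*(U-1)^2*VV T U*(T*U+U-2)^2, 0, (8 - 40*U + 66*U^2 - 40*U^3 + 8*U^4 + 16*T - 56*T*U + 72*T*U^2 - 56*T*U^3 + 16*T*U^4 + 8*T^2 - 24*T^2*U + 44*T^2*U^2 - 24*T^2*U^3 + 8*T^2*U^4 - 8*T^3*U + 8*T^3*U^2 - 8*T^3*U^3 + 2*T^4*U^2):] e"
  unfolding FF_def sg0_def sg1_def sg2_def sg3_def sg4_def C0_def C1_def C2_def C3_def C4_def VV_def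
  by (simp add: field_simps) algebra

lemma lp_P1_1:
  fixes t u :: real
  assumes "u \<noteq> 0"
  defines "T \<equiv> complex_of_real t" and "U \<equiv> complex_of_real u"
  shows "lpoly (complexify4 (gG t u)) (mk4 1 1 U U) (mk4 1 (-1) 0 0) = [:0, 0, 2*(U-1)^2*VV T U*(T*U+U-2)^2, 0, (8 - 40*U + 66*U^2 - 40*U^3 + 8*U^4 + 16*T - 56*T*U + 72*T*U^2 - 56*T*U^3 + 16*T*U^4 + 8*T^2 - 24*T^2*U + 44*T^2*U^2 - 24*T^2*U^3 + 8*T^2*U^4 - 8*T^3*U + 8*T^3*U^2 - 8*T^3*U^3 + 2*T^4*U^2):]"
  by (rule lpoly_f_eq[OF assms(1)]) (use ff_P1_1[of T U] in \<open>simp add: T_def U_def\<close>)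

lemma ff_P1_2: fixes T U e :: complex
  shows "FF T U (1 + e * (0)) (1 + e * (0)) (U + e * (1)) (U + e * (-1)) = poly [:0, 0, 2*(U-1)^2*VV T U*(T+1-2*U)^2, 0, (8 - 40*U + 66*U^2 - 40*U^3 + 8*U^4 + 16*T - 56*T*U + 72*T*U^2 - 56*T*U^3 + 16*T*U^4 + 8*T^2 - 24*T^2*U + 44*T^2*U^2 - 24*T^2*U^3 + 8*T^2*U^4 - 8*T^3*U + 8*T^3*U^2 - 8*T^3*U^3 + 2*T^4*U^2):] e"
  unfolding FF_def sg0_def sg1_def sg2_def sg3_def sg4_def C0_def C1_def C2_def C3_def C4_def VV_def
  by (simp add: field_simps) algebra

lemma lp_P1_2:
  fixes t u :: real
  assumes "u \<noteq> 0"
  defines "T \<equiv> complex_of_real t" and "U \<equiv> complex_of_real u"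
  shows "lpoly (complexify4 (gG t u)) (mk4 1 1 U U) (mk4 0 0 1 (-1)) = [:0, 0, 2*(U-1)^2*VV T U*(T+1-2*U)^2, 0, (8 - 40*U + 66*U^2 - 40*U^3 + 8*U^4 + 16*T - 56*T*U + 72*T*U^2 - 56*T*U^3 + 16*T*U^4 + 8*T^2 - 24*T^2*U + 44*T^2*U^2 - 24*T^2*U^3 + 8*T^2*U^4 - 8*T^3*U + 8*T^3*U^2 - 8*T^3*U^3 + 2*T^4*U^2):]"
  by (rule lpoly_f_eq[OF assms(1)]) (use ff_P1_2[of T U] in \<open>simp add: T_def U_def\<close>)

lemma ff_P1_3: fixes T U e :: complex
  shows "FF T U (1 + e * (1)) (1 + e * (1)) (U + e * (0)) (U + e * (0)) = poly [:0, 0, 2*(T-1)^4*U^2*(U-1)^2*(U+1)^2, (4*U^2 - 4*U^4 - 16*T*U^2 + 16*T*U^4 + 24*T^2*U^2 - 24*T^2*U^4 - 16*T^3*U^2 + 16*T^3*U^4 + 4*T^4*U^2 - 4*T^4*U^4), (2*U^2 - 8*T*U^2 + 12*T^2*U^2 - 8*T^3*U^2 + 2*T^4*U^2):] e"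
  unfolding FF_def sg0_def sg1_def sg2_def sg3_def sg4_def C0_def C1_def C2_def C3_def C4_def VV_def
  by (simp add: field_simps) algebra

lemma lp_P1_3:
  fixes t u :: real
  assumes "u \<noteq> 0"
  defines "T \<equiv> complex_of_real t" and "U \<equiv> complex_of_real u"
  shows "lpoly (complexify4 (gG t u)) (mk4 1 1 U U) (mk4 1 1 0 0) = [:0, 0, 2*(T-1)^4*U^2*(U-1)^2*(U+1)^2, (4*U^2 - 4*U^4 - 16*T*U^2 + 16*T*U^4 + 24*T^2*U^2 - 24*T^2*U^4 - 16*T^3*U^2 + 16*T^3*U^4 + 4*T^4*U^2 - 4*T^4*U^4), (2*U^2 - 8*T*U^2 + 12*T^2*U^2 - 8*T^3*U^2 + 2*T^4*U^2):]"
  by (rule lpoly_f_eq[OF assms(1)]) (use ff_P1_3[of T U] in \<open>simp add: T_def U_def\<close>)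

lemma ff_P1_12: fixes T U e :: complex
  shows "FF T U (1 + e * (1)) (1 + e * (-1)) (U + e * (1)) (U + e * (-1)) = poly [:0, 0, (30 - 228*U + 618*U^2 - 840*U^3 + 618*U^4 - 228*U^5 + 30*U^6 + 72*T - 336*T*U + 792*T*U^2 - 1056*T*U^3 + 792*T*U^4 - 336*T*U^5 + 72*T*U^6 + 20*T^2 - 184*T^2*U + 412*T^2*U^2 - 496*T^2*U^3 + 412*T^2*U^4 - 184*T^2*U^5 + 20*T^2*U^6 + 8*T^3 - 16*T^3*U + 88*T^3*U^2 - 160*T^3*U^3 + 88*T^3*U^4 - 16*T^3*U^5 + 8*T^3*U^6 - 2*T^4 - 4*T^4*U + 10*T^4*U^2 - 8*T^4*U^3 + 10*T^4*U^4 - 4*T^4*U^5 - 2*T^4*U^6), 0, (2 + 8*U + 12*U^2 + 8*U^3 + 2*U^4 - 8*T - 32*T*U - 48*T*U^2 - 32*T*U^3 - 8*T*U^4 + 12*T^2 + 48*T^2*U + 72*T^2*U^2 + 48*T^2*U^3 + 12*T^2*U^4 - 8*T^3 - 32*T^3*U - 48*T^3*U^2 - 32*T^3*U^3 - 8*T^3*U^4 + 2*T^4 + 8*T^4*U + 12*T^4*U^2 + 8*T^4*U^3 + 2*T^4*U^4):] e"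
  unfolding FF_def sg0_def sg1_def sg2_def sg3_def sg4_def C0_def C1_def C2_def C3_def C4_def VV_def
  by (simp add: field_simps) algebra

lemma lp_P1_12:
  fixes t u :: real
  assumes "u \<noteq> 0"
  defines "T \<equiv> complex_of_real t" and "U \<equiv> complex_of_real u"
  shows "lpoly (complexify4 (gG t u)) (mk4 1 1 U U) ((\<lambda>i. mk4 1 (-1) 0 0 i + mk4 0 0 1 (-1) i)) = [:0, 0, (30 - 228*U + 618*U^2 - 840*U^3 + 618*U^4 - 228*U^5 + 30*U^6 + 72*T - 336*T*U + 792*T*U^2 - 1056*T*U^3 + 792*T*U^4 - 336*T*U^5 + 72*T*U^6 + 20*T^2 - 184*T^2*U + 412*T^2*U^2 - 496*T^2*U^3 + 412*T^2*U^4 - 184*T^2*U^5 + 20*T^2*U^6 + 8*T^3 - 16*T^3*U + 88*T^3*U^2 - 160*T^3*U^3 + 88*T^3*U^4 - 16*T^3*U^5 + 8*T^3*U^6 - 2*T^4 - 4*T^4*U + 10*T^4*U^2 - 8*T^4*U^3 + 10*T^4*U^4 - 4*T^4*U^5 - 2*T^4*U^6), 0, (2 + 8*U + 12*U^2 + 8*U^3 + 2*U^4 - 8*T - 32*T*U - 48*T*U^2 - 32*T*U^3 - 8*T*U^4 + 12*T^2 + 48*T^2*U + 72*T^2*U^2 + 48*T^2*U^3 + 12*T^2*U^4 - 8*T^3 - 32*T^3*U - 48*T^3*U^2 - 32*T^3*U^3 - 8*T^3*U^4 + 2*T^4 + 8*T^4*U + 12*T^4*U^2 + 8*T^4*U^3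 + 2*T^4*U^4):]"
  by (rule lpoly_f_eq[OF assms(1)]) (use ff_P1_12[of T U] in \<open>simp add: T_def U_def\<close>)

lemma ff_P1_13: fixes T U e :: complex
  shows "FF T U (1 + e * (2)) (1 + e * (0)) (U + e * (0)) (U + e * (0)) = poly [:0, 0, (24 - 168*U + 392*U^2 - 420*U^3 + 224*U^4 - 60*U^5 + 8*U^6 + 48*T - 168*T*U + 352*T*U^2 - 528*T*U^3 + 448*T*U^4 - 168*T*U^5 + 16*T*U^6 - 8*T^2 - 56*T^2*U + 200*T^2*U^2 - 248*T^2*U^3 + 200*T^2*U^4 - 128*T^2*U^5 + 40*T^2*U^6 + 8*T^3*U + 16*T^3*U^2 - 80*T^3*U^3 + 80*T^3*U^4 - 24*T^3*U^5 - 4*T^4*U^3 + 8*T^4*U^4 - 4*T^4*U^5), (48 - 304*U + 608*U^2 - 528*U^3 + 208*U^4 - 32*U^5 + 96*T - 272*T*U + 448*T*U^2 - 528*T*U^3 + 320*T*U^4 - 64*T*U^5 - 16*T^2 - 80*T^2*U + 224*T^2*U^2 - 176*T^2*U^3 + 80*T^2*U^4 - 32*T^2*U^5 + 16*T^3*U - 48*T^3*U^3 + 32*T^3*U^4), (32 - 176*U + 288*U^2 - 176*U^3 + 32*U^4 + 64*T - 160*T*U + 192*T*U^2 - 160*T*U^3 + 64*T*U^4 - 48*T^2*U + 96*T^2*U^2 - 48*T^2*U^3):] e"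
  unfolding FF_def sg0_def sg1_def sg2_def sg3_def sg4_def C0_def C1_def C2_def C3_def C4_def VV_def
  by (simp add: field_simps) algebra

lemma lp_P1_13:
  fixes t u :: real
  assumes "u \<noteq> 0"
  defines "T \<equiv> complex_of_real t" and "U \<equiv> complex_of_real u"
  shows "lpoly (complexify4 (gG t u)) (mk4 1 1 U U) ((\<lambda>i. mk4 1 (-1) 0 0 i + mk4 1 1 0 0 i)) = [:0, 0, (24 - 168*U + 392*U^2 - 420*U^3 + 224*U^4 - 60*U^5 + 8*U^6 + 48*T - 168*T*U + 352*T*U^2 - 528*T*U^3 + 448*T*U^4 - 168*T*U^5 + 16*T*U^6 - 8*T^2 - 56*T^2*U + 200*T^2*U^2 - 248*T^2*U^3 + 200*T^2*U^4 - 128*T^2*U^5 + 40*T^2*U^6 + 8*T^3*U + 16*T^3*U^2 - 80*T^3*U^3 + 80*T^3*U^4 - 24*T^3*U^5 - 4*T^4*U^3 + 8*T^4*U^4 - 4*T^4*U^5), (48 - 304*U + 608*U^2 - 528*U^3 + 208*U^4 - 32*U^5 + 96*T - 272*T*U + 448*T*U^2 - 528*T*U^3 + 320*T*U^4 - 64*T*U^5 - 16*T^2 - 80*T^2*U + 224*T^2*U^2 - 176*T^2*U^3 + 80*T^2*U^4 - 32*T^2*U^5 + 16*T^3*U - 48*T^3*U^3 + 32*T^3*U^4), (32 - 176*U + 288*U^2 - 176*U^3 + 32*U^4 + 64*T - 160*T*U + 192*T*U^2 - 160*T*U^3 + 64*T*U^4 - 48*T^2*U + 96*T^2*U^2 -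 48*T^2*U^3):]"
  by (rule lpoly_f_eq[OF assms(1)]) (use ff_P1_13[of T U] in \<open>simp add: T_def U_def\<close>)

lemma ff_P1_23: fixes T U e :: complex
  shows "FF T U (1 + e * (1)) (1 + e * (1)) (U + e * (1)) (U + e * (-1)) = poly [:0, 0, (6 - 60*U + 230*U^2 - 420*U^3 + 386*U^4 - 168*U^5 + 26*U^6 + 24*T - 168*T*U + 424*T*U^2 - 528*T*U^3 + 376*T*U^4 - 168*T*U^5 + 40*T*U^6 + 28*T^2 - 128*T^2*U + 236*T^2*U^2 - 248*T^2*U^3 + 164*T^2*U^4 - 56*T^2*U^5 + 4*T^2*U^6 + 8*T^3 - 24*T^3*U + 56*T^3*U^2 - 80*T^3*U^3 + 40*T^3*U^4 + 8*T^3*U^5 - 8*T^3*U^6 - 2*T^4 - 4*T^4*U + 14*T^4*U^2 - 4*T^4*U^3 - 6*T^4*U^4 + 2*T^4*U^6), (12 - 88*U + 248*U^2 - 312*U^3 + 172*U^4 - 32*U^5 + 48*T - 272*T*U + 544*T*U^2 - 528*T*U^3 + 272*T*U^4 - 64*T*U^5 + 56*T^2 - 224*T^2*U + 368*T^2*U^2 - 320*T^2*U^3 + 152*T^2*U^4 - 32*T^2*U^5 + 16*T^3 - 48*T^3*U + 96*T^3*U^2 - 112*T^3*U^3 + 48*T^3*U^4 - 4*T^4 - 8*T^4*U + 24*T^4*U^2 - 8*T^4*U^3 - 4*T^4*U^4), (14 - 68*U + 108*U^2 - 68*U^3 + 14*U^4 + 40*T - 160*T*U + 240*T*U^2 - 160*T*U^3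 + 40*T*U^4 + 36*T^2 - 120*T^2*U + 168*T^2*U^2 - 120*T^2*U^3 + 36*T^2*U^4 + 8*T^3 - 32*T^3*U + 48*T^3*U^2 - 32*T^3*U^3 + 8*T^3*U^4 - 2*T^4 - 4*T^4*U + 12*T^4*U^2 - 4*T^4*U^3 - 2*T^4*U^4):] e"
  unfolding FF_def sg0_def sg1_def sg2_def sg3_def sg4_def C0_def C1_def C2_def C3_def C4_def VV_def
  by (simp add: field_simps) algebra

lemma lp_P1_23:
  fixes t u :: real
  assumes "u \<noteq> 0"
  defines "T \<equiv> complex_of_real t" and "U \<equiv> complex_of_real u"
  shows "lpoly (complexify4 (gG t u)) (mk4 1 1 U U) ((\<lambda>i. mk4 0 0 1 (-1) i + mk4 1 1 0 0 i)) = [:0, 0, (6 - 60*U + 230*U^2 - 420*U^3 + 386*U^4 - 168*U^5 + 26*U^6 + 24*T - 168*T*U + 424*T*U^2 - 528*T*U^3 + 376*T*U^4 - 168*T*U^5 + 40*T*U^6 + 28*T^2 - 128*T^2*U + 236*T^2*U^2 - 248*T^2*U^3 + 164*T^2*U^4 - 56*T^2*U^5 + 4*T^2*U^6 + 8*T^3 - 24*T^3*U + 56*T^3*U^2 - 80*T^3*U^3 + 40*T^3*U^4 + 8*T^3*U^5 - 8*T^3*U^6 - 2*T^4 - 4*T^4*U + 14*T^4*U^2 - 4*T^4*U^3 - 6*T^4*U^4 + 2*T^4*U^6), (12 - 88*U + 248*U^2 - 312*U^3 + 172*U^4 - 32*U^5 + 48*T - 272*T*U + 544*T*U^2 - 528*T*U^3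 + 272*T*U^4 - 64*T*U^5 + 56*T^2 - 224*T^2*U + 368*T^2*U^2 - 320*T^2*U^3 + 152*T^2*U^4 - 32*T^2*U^5 + 16*T^3 - 48*T^3*U + 96*T^3*U^2 - 112*T^3*U^3 + 48*T^3*U^4 - 4*T^4 - 8*T^4*U + 24*T^4*U^2 - 8*T^4*U^3 - 4*T^4*U^4), (14 - 68*U + 108*U^2 - 68*U^3 + 14*U^4 + 40*T - 160*T*U + 240*T*U^2 - 160*T*U^3 + 40*T*U^4 + 36*T^2 - 120*T^2*U + 168*T^2*U^2 - 120*T^2*U^3 + 36*T^2*U^4 + 8*T^3 - 32*T^3*U + 48*T^3*U^2 - 32*T^3*U^3 + 8*T^3*U^4 - 2*T^4 - 4*T^4*U + 12*T^4*U^2 - 4*T^4*U^3 - 2*T^4*U^4):]"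
  by (rule lpoly_f_eq[OF assms(1)]) (use ff_P1_23[of T U] in \<open>simp add: T_def U_def\<close>)

lemma ff_P2_1: fixes T U e :: complex
  shows "FF T U (U + e * (1)) (U + e * (-1)) (1 + e * (0)) (1 + e * (0)) = poly [:0, 0, 2*(U-1)^2*VV T U*(T+1-2*U)^2, 0, (8 - 40*U + 66*U^2 - 40*U^3 + 8*U^4 + 16*T - 56*T*U + 72*T*U^2 - 56*T*U^3 + 16*T*U^4 + 8*T^2 - 24*T^2*U + 44*T^2*U^2 - 24*T^2*U^3 + 8*T^2*U^4 - 8*T^3*U + 8*T^3*U^2 - 8*T^3*U^3 + 2*T^4*U^2):] e"
  unfolding FF_def sg0_def sg1_def sg2_def sg3_def sg4_def C0_def C1_def C2_def C3_def C4_def VV_def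
  by (simp add: field_simps) algebra

lemma lp_P2_1:
  fixes t u :: real
  assumes "u \<noteq> 0"
  defines "T \<equiv> complex_of_real t" and "U \<equiv> complex_of_real u"
  shows "lpoly (complexify4 (gG t u)) (mk4 U U 1 1) (mk4 1 (-1) 0 0) = [:0, 0, 2*(U-1)^2*VV T U*(T+1-2*U)^2, 0, (8 - 40*U + 66*U^2 - 40*U^3 + 8*U^4 + 16*T - 56*T*U + 72*T*U^2 - 56*T*U^3 + 16*T*U^4 + 8*T^2 - 24*T^2*U + 44*T^2*U^2 - 24*T^2*U^3 + 8*T^2*U^4 - 8*T^3*U + 8*T^3*U^2 - 8*T^3*U^3 + 2*T^4*U^2):]"
  by (rule lpoly_f_eq[OF assms(1)]) (use ff_P2_1[of T U] in \<open>simp add: T_def U_def\<close>)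

lemma ff_P2_2: fixes T U e :: complex
  shows "FF T U (U + e * (0)) (U + e * (0)) (1 + e * (1)) (1 + e * (-1)) = poly [:0, 0, 2*(U-1)^2*VV T U*(T*U+U-2)^2, 0, (8 - 40*U + 66*U^2 - 40*U^3 + 8*U^4 + 16*T - 56*T*U + 72*T*U^2 - 56*T*U^3 + 16*T*U^4 + 8*T^2 - 24*T^2*U + 44*T^2*U^2 - 24*T^2*U^3 + 8*T^2*U^4 - 8*T^3*U + 8*T^3*U^2 - 8*T^3*U^3 + 2*T^4*U^2):] e"
  unfolding FF_def sg0_def sg1_def sg2_def sg3_def sg4_def C0_def C1_def C2_def C3_def C4_def VV_def
  by (simp add: field_simps) algebra

lemma lp_P2_2:
  fixes t u :: real
  assumes "u \<noteq> 0"
  defines "T \<equiv> complex_of_real t" and "U \<equiv> complex_of_real u"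
  shows "lpoly (complexify4 (gG t u)) (mk4 U U 1 1) (mk4 0 0 1 (-1)) = [:0, 0, 2*(U-1)^2*VV T U*(T*U+U-2)^2, 0, (8 - 40*U + 66*U^2 - 40*U^3 + 8*U^4 + 16*T - 56*T*U + 72*T*U^2 - 56*T*U^3 + 16*T*U^4 + 8*T^2 - 24*T^2*U + 44*T^2*U^2 - 24*T^2*U^3 + 8*T^2*U^4 - 8*T^3*U + 8*T^3*U^2 - 8*T^3*U^3 + 2*T^4*U^2):]"
  by (rule lpoly_f_eq[OF assms(1)]) (use ff_P2_2[of T U] in \<open>simp add: T_def U_def\<close>)

lemma ff_P2_3: fixes T U e :: complex
  shows "FF T U (U + e * (1)) (U + e * (1)) (1 + e * (0)) (1 + e * (0)) = poly [:0, 0, 2*(T-1)^4*(U-1)^2*(U+1)^2, (-4*U + 4*U^3 + 16*T*U - 16*T*U^3 - 24*T^2*U + 24*T^2*U^3 + 16*T^3*U - 16*T^3*U^3 - 4*T^4*U + 4*T^4*U^3), (2*U^2 - 8*T*U^2 + 12*T^2*U^2 - 8*T^3*U^2 + 2*T^4*U^2):] e"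
  unfolding FF_def sg0_def sg1_def sg2_def sg3_def sg4_def C0_def C1_def C2_def C3_def C4_def VV_def
  by (simp add: field_simps) algebra

lemma lp_P2_3:
  fixes t u :: real
  assumes "u \<noteq> 0"
  defines "T \<equiv> complex_of_real t" and "U \<equiv> complex_of_real u"
  shows "lpoly (complexify4 (gG t u)) (mk4 U U 1 1) (mk4 1 1 0 0) = [:0, 0, 2*(T-1)^4*(U-1)^2*(U+1)^2, (-4*U + 4*U^3 + 16*T*U - 16*T*U^3 - 24*T^2*U + 24*T^2*U^3 + 16*T^3*U - 16*T^3*U^3 - 4*T^4*U + 4*T^4*U^3), (2*U^2 - 8*T*U^2 + 12*T^2*U^2 - 8*T^3*U^2 + 2*T^4*U^2):]"
  by (rule lpoly_f_eq[OF assms(1)]) (use ff_P2_3[of T U] in \<open>simp add: T_def U_def\<close>)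

lemma ff_P2_12: fixes T U e :: complex
  shows "FF T U (U + e * (1)) (U + e * (-1)) (1 + e * (1)) (1 + e * (-1)) = poly [:0, 0, (30 - 228*U + 618*U^2 - 840*U^3 + 618*U^4 - 228*U^5 + 30*U^6 + 72*T - 336*T*U + 792*T*U^2 - 1056*T*U^3 + 792*T*U^4 - 336*T*U^5 + 72*T*U^6 + 20*T^2 - 184*T^2*U + 412*T^2*U^2 - 496*T^2*U^3 + 412*T^2*U^4 - 184*T^2*U^5 + 20*T^2*U^6 + 8*T^3 - 16*T^3*U + 88*T^3*U^2 - 160*T^3*U^3 + 88*T^3*U^4 - 16*T^3*U^5 + 8*T^3*U^6 - 2*T^4 - 4*T^4*U + 10*T^4*U^2 - 8*T^4*U^3 + 10*T^4*U^4 - 4*T^4*U^5 - 2*T^4*U^6), 0, (2 + 8*U + 12*U^2 + 8*U^3 + 2*U^4 - 8*T - 32*T*U - 48*T*U^2 - 32*T*U^3 - 8*T*U^4 + 12*T^2 + 48*T^2*U + 72*T^2*U^2 + 48*T^2*U^3 + 12*T^2*U^4 - 8*T^3 - 32*T^3*U - 48*T^3*U^2 - 32*T^3*U^3 - 8*T^3*U^4 + 2*T^4 + 8*T^4*U + 12*T^4*U^2 + 8*T^4*U^3 + 2*T^4*U^4):] e"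
  unfolding FF_def sg0_def sg1_def sg2_def sg3_def sg4_def C0_def C1_def C2_def C3_def C4_def VV_def
  by (simp add: field_simps) algebra

lemma lp_P2_12:
  fixes t u :: real
  assumes "u \<noteq> 0"
  defines "T \<equiv> complex_of_real t" and "U \<equiv> complex_of_real u"
  shows "lpoly (complexify4 (gG t u)) (mk4 U U 1 1) ((\<lambda>i. mk4 1 (-1) 0 0 i + mk4 0 0 1 (-1) i)) = [:0, 0, (30 - 228*U + 618*U^2 - 840*U^3 + 618*U^4 - 228*U^5 + 30*U^6 + 72*T - 336*T*U + 792*T*U^2 - 1056*T*U^3 + 792*T*U^4 - 336*T*U^5 + 72*T*U^6 + 20*T^2 - 184*T^2*U + 412*T^2*U^2 - 496*T^2*U^3 + 412*T^2*U^4 - 184*T^2*U^5 + 20*T^2*U^6 + 8*T^3 - 16*T^3*U + 88*T^3*U^2 - 160*T^3*U^3 + 88*T^3*U^4 - 16*T^3*U^5 + 8*T^3*U^6 - 2*T^4 - 4*T^4*U + 10*T^4*U^2 - 8*T^4*U^3 + 10*T^4*U^4 - 4*T^4*U^5 - 2*T^4*U^6), 0, (2 + 8*U + 12*U^2 + 8*U^3 + 2*U^4 - 8*T - 32*T*U - 48*T*U^2 - 32*T*U^3 - 8*T*U^4 + 12*T^2 + 48*T^2*U + 72*T^2*U^2 + 48*T^2*U^3 + 12*T^2*U^4 - 8*T^3 - 32*T^3*U - 48*T^3*U^2 - 32*T^3*U^3 - 8*T^3*U^4 + 2*T^4 + 8*T^4*U + 12*T^4*U^2 + 8*T^4*U^3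 + 2*T^4*U^4):]"
  by (rule lpoly_f_eq[OF assms(1)]) (use ff_P2_12[of T U] in \<open>simp add: T_def U_def\<close>)

lemma ff_P2_13: fixes T U e :: complex
  shows "FF T U (U + e * (2)) (U + e * (0)) (1 + e * (0)) (1 + e * (0)) = poly [:0, 0, (8 - 60*U + 224*U^2 - 420*U^3 + 392*U^4 - 168*U^5 + 24*U^6 + 16*T - 168*T*U + 448*T*U^2 - 528*T*U^3 + 352*T*U^4 - 168*T*U^5 + 48*T*U^6 + 40*T^2 - 128*T^2*U + 200*T^2*U^2 - 248*T^2*U^3 + 200*T^2*U^4 - 56*T^2*U^5 - 8*T^2*U^6 - 24*T^3*U + 80*T^3*U^2 - 80*T^3*U^3 + 16*T^3*U^4 + 8*T^3*U^5 - 4*T^4*U + 8*T^4*U^2 - 4*T^4*U^3), (-32 + 208*U - 528*U^2 + 608*U^3 - 304*U^4 + 48*U^5 - 64*T + 320*T*U - 528*T*U^2 + 448*T*U^3 - 272*T*U^4 + 96*T*U^5 - 32*T^2 + 80*T^2*U - 176*T^2*U^2 + 224*T^2*U^3 - 80*T^2*U^4 - 16*T^2*U^5 + 32*T^3*U - 48*T^3*U^2 + 16*T^3*U^4), (32 - 176*U + 288*U^2 - 176*U^3 + 32*U^4 + 64*T - 160*T*U + 192*T*U^2 - 160*T*U^3 + 64*T*U^4 - 48*T^2*U + 96*T^2*U^2 - 48*T^2*U^3):] e"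
  unfolding FF_def sg0_def sg1_def sg2_def sg3_def sg4_def C0_def C1_def C2_def C3_def C4_def VV_def
  by (simp add: field_simps) algebra

lemma lp_P2_13:
  fixes t u :: real
  assumes "u \<noteq> 0"
  defines "T \<equiv> complex_of_real t" and "U \<equiv> complex_of_real u"
  shows "lpoly (complexify4 (gG t u)) (mk4 U U 1 1) ((\<lambda>i. mk4 1 (-1) 0 0 i + mk4 1 1 0 0 i)) = [:0, 0, (8 - 60*U + 224*U^2 - 420*U^3 + 392*U^4 - 168*U^5 + 24*U^6 + 16*T - 168*T*U + 448*T*U^2 - 528*T*U^3 + 352*T*U^4 - 168*T*U^5 + 48*T*U^6 + 40*T^2 - 128*T^2*U + 200*T^2*U^2 - 248*T^2*U^3 + 200*T^2*U^4 - 56*T^2*U^5 - 8*T^2*U^6 - 24*T^3*U + 80*T^3*U^2 - 80*T^3*U^3 + 16*T^3*U^4 + 8*T^3*U^5 - 4*T^4*U + 8*T^4*U^2 - 4*T^4*U^3), (-32 + 208*U - 528*U^2 + 608*U^3 - 304*U^4 + 48*U^5 - 64*T + 320*T*U - 528*T*U^2 + 448*T*U^3 - 272*T*U^4 + 96*T*U^5 - 32*T^2 + 80*T^2*U - 176*T^2*U^2 + 224*T^2*U^3 - 80*T^2*U^4 - 16*T^2*U^5 + 32*T^3*U - 48*T^3*U^2 + 16*T^3*U^4), (32 - 176*U + 288*U^2 - 176*U^3 + 32*U^4 + 64*T - 160*T*U + 192*T*U^2 - 160*T*U^3 + 64*T*U^4 - 48*T^2*U + 96*T^2*U^2 - 4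8*T^2*U^3):]"
  by (rule lpoly_f_eq[OF assms(1)]) (use ff_P2_13[of T U] in \<open>simp add: T_def U_def\<close>)

lemma ff_P2_23: fixes T U e :: complex
  shows "FF T U (U + e * (1)) (U + e * (1)) (1 + e * (1)) (1 + e * (-1)) = poly [:0, 0, (26 - 168*U + 386*U^2 - 420*U^3 + 230*U^4 - 60*U^5 + 6*U^6 + 40*T - 168*T*U + 376*T*U^2 - 528*T*U^3 + 424*T*U^4 - 168*T*U^5 + 24*T*U^6 + 4*T^2 - 56*T^2*U + 164*T^2*U^2 - 248*T^2*U^3 + 236*T^2*U^4 - 128*T^2*U^5 + 28*T^2*U^6 - 8*T^3 + 8*T^3*U + 40*T^3*U^2 - 80*T^3*U^3 + 56*T^3*U^4 - 24*T^3*U^5 + 8*T^3*U^6 + 2*T^4 - 6*T^4*U^2 - 4*T^4*U^3 + 14*T^4*U^4 - 4*T^4*U^5 - 2*T^4*U^6), (-32 + 172*U - 312*U^2 + 248*U^3 - 88*U^4 + 12*U^5 - 64*T + 272*T*U - 528*T*U^2 + 544*T*U^3 - 272*T*U^4 + 48*T*U^5 - 32*T^2 + 152*T^2*U - 320*T^2*U^2 + 368*T^2*U^3 - 224*T^2*U^4 + 56*T^2*U^5 + 48*T^3*U - 112*T^3*U^2 + 96*T^3*U^3 - 48*T^3*U^4 + 16*T^3*U^5 - 4*T^4*U - 8*T^4*U^2 + 24*T^4*U^3 - 8*T^4*U^4 - 4*T^4*U^5), (14 - 68*U + 108*U^2 - 68*U^3 + 14*U^4 + 40*T - 160*T*U +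 240*T*U^2 - 160*T*U^3 + 40*T*U^4 + 36*T^2 - 120*T^2*U + 168*T^2*U^2 - 120*T^2*U^3 + 36*T^2*U^4 + 8*T^3 - 32*T^3*U + 48*T^3*U^2 - 32*T^3*U^3 + 8*T^3*U^4 - 2*T^4 - 4*T^4*U + 12*T^4*U^2 - 4*T^4*U^3 - 2*T^4*U^4):] e"
  unfolding FF_def sg0_def sg1_def sg2_def sg3_def sg4_def C0_def C1_def C2_def C3_def C4_def VV_def
  by (simp add: field_simps) algebra

lemma lp_P2_23:
  fixes t u :: real
  assumes "u \<noteq> 0"
  defines "T \<equiv> complex_of_real t" and "U \<equiv> complex_of_real u"
  shows "lpoly (complexify4 (gG t u)) (mk4 U U 1 1) ((\<lambda>i. mk4 0 0 1 (-1) i + mk4 1 1 0 0 i)) = [:0, 0, (26 - 168*U + 386*U^2 - 420*U^3 + 230*U^4 - 60*U^5 + 6*U^6 + 40*T - 168*T*U + 376*T*U^2 - 528*T*U^3 + 424*T*U^4 - 168*T*U^5 + 24*T*U^6 + 4*T^2 - 56*T^2*U + 164*T^2*U^2 - 248*T^2*U^3 + 236*T^2*U^4 - 128*T^2*U^5 + 28*T^2*U^6 - 8*T^3 + 8*T^3*U + 40*T^3*U^2 - 80*T^3*U^3 + 56*T^3*U^4 - 24*T^3*U^5 + 8*T^3*U^6 + 2*T^4 - 6*T^4*U^2 - 4*T^4*U^3 + 14*T^4*U^4 - 4*T^4*U^5 - 2*T^4*U^6), (-32 + 172*U - 312*U^2 + 248*U^3 - 88*U^4 + 12*U^5 - 64*T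 + 272*T*U - 528*T*U^2 + 544*T*U^3 - 272*T*U^4 + 48*T*U^5 - 32*T^2 + 152*T^2*U - 320*T^2*U^2 + 368*T^2*U^3 - 224*T^2*U^4 + 56*T^2*U^5 + 48*T^3*U - 112*T^3*U^2 + 96*T^3*U^3 - 48*T^3*U^4 + 16*T^3*U^5 - 4*T^4*U - 8*T^4*U^2 + 24*T^4*U^3 - 8*T^4*U^4 - 4*T^4*U^5), (14 - 68*U + 108*U^2 - 68*U^3 + 14*U^4 + 40*T - 160*T*U + 240*T*U^2 - 160*T*U^3 + 40*T*U^4 + 36*T^2 - 120*T^2*U + 168*T^2*U^2 - 120*T^2*U^3 + 36*T^2*U^4 + 8*T^3 - 32*T^3*U + 48*T^3*U^2 - 32*T^3*U^3 + 8*T^3*U^4 - 2*T^4 - 4*T^4*U + 12*T^4*U^2 - 4*T^4*U^3 - 2*T^4*U^4):]"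
  by (rule lpoly_f_eq[OF assms(1)]) (use ff_P2_23[of T U] in \<open>simp add: T_def U_def\<close>)

lemma ff_P3_1: fixes T U e :: complex
  shows "FF T U (1 + e * (1)) (U + e * (0)) (1 + e * (-1)) (U + e * (0)) = poly [:0, 0, 2*(U-1)^2*VV T U*(T*U+U-2)^2, 0, (8 - 40*U + 66*U^2 - 40*U^3 + 8*U^4 + 16*T - 56*T*U + 72*T*U^2 - 56*T*U^3 + 16*T*U^4 + 8*T^2 - 24*T^2*U + 44*T^2*U^2 - 24*T^2*U^3 + 8*T^2*U^4 - 8*T^3*U + 8*T^3*U^2 - 8*T^3*U^3 + 2*T^4*U^2):] e"
  unfolding FF_def sg0_def sg1_def sg2_def sg3_def sg4_def C0_def C1_def C2_def C3_def C4_def VV_def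
  by (simp add: field_simps) algebra

lemma lp_P3_1:
  fixes t u :: real
  assumes "u \<noteq> 0"
  defines "T \<equiv> complex_of_real t" and "U \<equiv> complex_of_real u"
  shows "lpoly (complexify4 (gG t u)) (mk4 1 U 1 U) (mk4 1 0 (-1) 0) = [:0, 0, 2*(U-1)^2*VV T U*(T*U+U-2)^2, 0, (8 - 40*U + 66*U^2 - 40*U^3 + 8*U^4 + 16*T - 56*T*U + 72*T*U^2 - 56*T*U^3 + 16*T*U^4 + 8*T^2 - 24*T^2*U + 44*T^2*U^2 - 24*T^2*U^3 + 8*T^2*U^4 - 8*T^3*U + 8*T^3*U^2 - 8*T^3*U^3 + 2*T^4*U^2):]"
  by (rule lpoly_f_eq[OF assms(1)]) (use ff_P3_1[of T U] in \<open>simp add: T_def U_def\<close>)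

lemma ff_P3_2: fixes T U e :: complex
  shows "FF T U (1 + e * (0)) (U + e * (1)) (1 + e * (0)) (U + e * (-1)) = poly [:0, 0, 2*(U-1)^2*VV T U*(T+1-2*U)^2, 0, (8 - 40*U + 66*U^2 - 40*U^3 + 8*U^4 + 16*T - 56*T*U + 72*T*U^2 - 56*T*U^3 + 16*T*U^4 + 8*T^2 - 24*T^2*U + 44*T^2*U^2 - 24*T^2*U^3 + 8*T^2*U^4 - 8*T^3*U + 8*T^3*U^2 - 8*T^3*U^3 + 2*T^4*U^2):] e"
  unfolding FF_def sg0_def sg1_def sg2_def sg3_def sg4_def C0_def C1_def C2_def C3_def C4_def VV_def
  by (simp add: field_simps) algebra

lemma lp_P3_2:
  fixes t u :: real
  assumes "u \<noteq> 0"
  defines "T \<equiv> complex_of_real t" and "U \<equiv> complex_of_real u"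
  shows "lpoly (complexify4 (gG t u)) (mk4 1 U 1 U) (mk4 0 1 0 (-1)) = [:0, 0, 2*(U-1)^2*VV T U*(T+1-2*U)^2, 0, (8 - 40*U + 66*U^2 - 40*U^3 + 8*U^4 + 16*T - 56*T*U + 72*T*U^2 - 56*T*U^3 + 16*T*U^4 + 8*T^2 - 24*T^2*U + 44*T^2*U^2 - 24*T^2*U^3 + 8*T^2*U^4 - 8*T^3*U + 8*T^3*U^2 - 8*T^3*U^3 + 2*T^4*U^2):]"
  by (rule lpoly_f_eq[OF assms(1)]) (use ff_P3_2[of T U] in \<open>simp add: T_def U_def\<close>)

lemma ff_P3_3: fixes T U e :: complex
  shows "FF T U (1 + e * (1)) (U + e * (0)) (1 + e * (1)) (U + e * (0)) = poly [:0, 0, 2*(T-1)^4*U^2*(U-1)^2*(U+1)^2, (4*U^2 - 4*U^4 - 16*T*U^2 + 16*T*U^4 + 24*T^2*U^2 - 24*T^2*U^4 - 16*T^3*U^2 + 16*T^3*U^4 + 4*T^4*U^2 - 4*T^4*U^4), (2*U^2 - 8*T*U^2 + 12*T^2*U^2 - 8*T^3*U^2 + 2*T^4*U^2):] e"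
  unfolding FF_def sg0_def sg1_def sg2_def sg3_def sg4_def C0_def C1_def C2_def C3_def C4_def VV_def
  by (simp add: field_simps) algebra

lemma lp_P3_3:
  fixes t u :: real
  assumes "u \<noteq> 0"
  defines "T \<equiv> complex_of_real t" and "U \<equiv> complex_of_real u"
  shows "lpoly (complexify4 (gG t u)) (mk4 1 U 1 U) (mk4 1 0 1 0) = [:0, 0, 2*(T-1)^4*U^2*(U-1)^2*(U+1)^2, (4*U^2 - 4*U^4 - 16*T*U^2 + 16*T*U^4 + 24*T^2*U^2 - 24*T^2*U^4 - 16*T^3*U^2 + 16*T^3*U^4 + 4*T^4*U^2 - 4*T^4*U^4), (2*U^2 - 8*T*U^2 + 12*T^2*U^2 - 8*T^3*U^2 + 2*T^4*U^2):]"
  by (rule lpoly_f_eq[OF assms(1)]) (use ff_P3_3[of T U] in \<open>simp add: T_def U_def\<close>)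

lemma ff_P3_12: fixes T U e :: complex
  shows "FF T U (1 + e * (1)) (U + e * (1)) (1 + e * (-1)) (U + e * (-1)) = poly [:0, 0, (30 - 228*U + 618*U^2 - 840*U^3 + 618*U^4 - 228*U^5 + 30*U^6 + 72*T - 336*T*U + 792*T*U^2 - 1056*T*U^3 + 792*T*U^4 - 336*T*U^5 + 72*T*U^6 + 20*T^2 - 184*T^2*U + 412*T^2*U^2 - 496*T^2*U^3 + 412*T^2*U^4 - 184*T^2*U^5 + 20*T^2*U^6 + 8*T^3 - 16*T^3*U + 88*T^3*U^2 - 160*T^3*U^3 + 88*T^3*U^4 - 16*T^3*U^5 + 8*T^3*U^6 - 2*T^4 - 4*T^4*U + 10*T^4*U^2 - 8*T^4*U^3 + 10*T^4*U^4 - 4*T^4*U^5 - 2*T^4*U^6), 0, (2 + 8*U + 12*U^2 + 8*U^3 + 2*U^4 - 8*T - 32*T*U - 48*T*U^2 - 32*T*U^3 - 8*T*U^4 + 12*T^2 + 48*T^2*U + 72*T^2*U^2 + 48*T^2*U^3 + 12*T^2*U^4 - 8*T^3 - 32*T^3*U - 48*T^3*U^2 - 32*T^3*U^3 - 8*T^3*U^4 + 2*T^4 + 8*T^4*U + 12*T^4*U^2 + 8*T^4*U^3 + 2*T^4*U^4):] e"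
  unfolding FF_def sg0_def sg1_def sg2_def sg3_def sg4_def C0_def C1_def C2_def C3_def C4_def VV_def
  by (simp add: field_simps) algebra

lemma lp_P3_12:
  fixes t u :: real
  assumes "u \<noteq> 0"
  defines "T \<equiv> complex_of_real t" and "U \<equiv> complex_of_real u"
  shows "lpoly (complexify4 (gG t u)) (mk4 1 U 1 U) ((\<lambda>i. mk4 1 0 (-1) 0 i + mk4 0 1 0 (-1) i)) = [:0, 0, (30 - 228*U + 618*U^2 - 840*U^3 + 618*U^4 - 228*U^5 + 30*U^6 + 72*T - 336*T*U + 792*T*U^2 - 1056*T*U^3 + 792*T*U^4 - 336*T*U^5 + 72*T*U^6 + 20*T^2 - 184*T^2*U + 412*T^2*U^2 - 496*T^2*U^3 + 412*T^2*U^4 - 184*T^2*U^5 + 20*T^2*U^6 + 8*T^3 - 16*T^3*U + 88*T^3*U^2 - 160*T^3*U^3 + 88*T^3*U^4 - 16*T^3*U^5 + 8*T^3*U^6 - 2*T^4 - 4*T^4*U + 10*T^4*U^2 - 8*T^4*U^3 + 10*T^4*U^4 - 4*T^4*U^5 - 2*T^4*U^6), 0, (2 + 8*U + 12*U^2 + 8*U^3 + 2*U^4 - 8*T - 32*T*U - 48*T*U^2 - 32*T*U^3 - 8*T*U^4 + 12*T^2 + 48*T^2*U + 72*T^2*U^2 + 48*T^2*U^3 + 12*T^2*U^4 - 8*T^3 - 32*T^3*U - 48*T^3*U^2 - 32*T^3*U^3 - 8*T^3*U^4 + 2*T^4 + 8*T^4*U + 12*T^4*U^2 + 8*T^4*U^3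 + 2*T^4*U^4):]"
  by (rule lpoly_f_eq[OF assms(1)]) (use ff_P3_12[of T U] in \<open>simp add: T_def U_def\<close>)

lemma ff_P3_13: fixes T U e :: complex
  shows "FF T U (1 + e * (2)) (U + e * (0)) (1 + e * (0)) (U + e * (0)) = poly [:0, 0, (24 - 168*U + 392*U^2 - 420*U^3 + 224*U^4 - 60*U^5 + 8*U^6 + 48*T - 168*T*U + 352*T*U^2 - 528*T*U^3 + 448*T*U^4 - 168*T*U^5 + 16*T*U^6 - 8*T^2 - 56*T^2*U + 200*T^2*U^2 - 248*T^2*U^3 + 200*T^2*U^4 - 128*T^2*U^5 + 40*T^2*U^6 + 8*T^3*U + 16*T^3*U^2 - 80*T^3*U^3 + 80*T^3*U^4 - 24*T^3*U^5 - 4*T^4*U^3 + 8*T^4*U^4 - 4*T^4*U^5), (48 - 304*U + 608*U^2 - 528*U^3 + 208*U^4 - 32*U^5 + 96*T - 272*T*U + 448*T*U^2 - 528*T*U^3 + 320*T*U^4 - 64*T*U^5 - 16*T^2 - 80*T^2*U + 224*T^2*U^2 - 176*T^2*U^3 + 80*T^2*U^4 - 32*T^2*U^5 + 16*T^3*U - 48*T^3*U^3 + 32*T^3*U^4), (32 - 176*U + 288*U^2 - 176*U^3 + 32*U^4 + 64*T - 160*T*U + 192*T*U^2 - 160*T*U^3 + 64*T*U^4 - 48*T^2*U + 96*T^2*U^2 - 48*T^2*U^3):] e"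
  unfolding FF_def sg0_def sg1_def sg2_def sg3_def sg4_def C0_def C1_def C2_def C3_def C4_def VV_def
  by (simp add: field_simps) algebra

lemma lp_P3_13:
  fixes t u :: real
  assumes "u \<noteq> 0"
  defines "T \<equiv> complex_of_real t" and "U \<equiv> complex_of_real u"
  shows "lpoly (complexify4 (gG t u)) (mk4 1 U 1 U) ((\<lambda>i. mk4 1 0 (-1) 0 i + mk4 1 0 1 0 i)) = [:0, 0, (24 - 168*U + 392*U^2 - 420*U^3 + 224*U^4 - 60*U^5 + 8*U^6 + 48*T - 168*T*U + 352*T*U^2 - 528*T*U^3 + 448*T*U^4 - 168*T*U^5 + 16*T*U^6 - 8*T^2 - 56*T^2*U + 200*T^2*U^2 - 248*T^2*U^3 + 200*T^2*U^4 - 128*T^2*U^5 + 40*T^2*U^6 + 8*T^3*U + 16*T^3*U^2 - 80*T^3*U^3 + 80*T^3*U^4 - 24*T^3*U^5 - 4*T^4*U^3 + 8*T^4*U^4 - 4*T^4*U^5), (48 - 304*U + 608*U^2 - 528*U^3 + 208*U^4 - 32*U^5 + 96*T - 272*T*U + 448*T*U^2 - 528*T*U^3 + 320*T*U^4 - 64*T*U^5 - 16*T^2 - 80*T^2*U + 224*T^2*U^2 - 176*T^2*U^3 + 80*T^2*U^4 - 32*T^2*U^5 + 16*T^3*U - 48*T^3*U^3 + 32*T^3*U^4), (32 - 176*U + 288*U^2 - 176*U^3 + 32*U^4 + 64*T - 160*T*U + 192*T*U^2 - 160*T*U^3 + 64*T*U^4 - 48*T^2*U + 96*T^2*U^2 -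 48*T^2*U^3):]"
  by (rule lpoly_f_eq[OF assms(1)]) (use ff_P3_13[of T U] in \<open>simp add: T_def U_def\<close>)

lemma ff_P3_23: fixes T U e :: complex
  shows "FF T U (1 + e * (1)) (U + e * (1)) (1 + e * (1)) (U + e * (-1)) = poly [:0, 0, (6 - 60*U + 230*U^2 - 420*U^3 + 386*U^4 - 168*U^5 + 26*U^6 + 24*T - 168*T*U + 424*T*U^2 - 528*T*U^3 + 376*T*U^4 - 168*T*U^5 + 40*T*U^6 + 28*T^2 - 128*T^2*U + 236*T^2*U^2 - 248*T^2*U^3 + 164*T^2*U^4 - 56*T^2*U^5 + 4*T^2*U^6 + 8*T^3 - 24*T^3*U + 56*T^3*U^2 - 80*T^3*U^3 + 40*T^3*U^4 + 8*T^3*U^5 - 8*T^3*U^6 - 2*T^4 - 4*T^4*U + 14*T^4*U^2 - 4*T^4*U^3 - 6*T^4*U^4 + 2*T^4*U^6), (12 - 88*U + 248*U^2 - 312*U^3 + 172*U^4 - 32*U^5 + 48*T - 272*T*U + 544*T*U^2 - 528*T*U^3 + 272*T*U^4 - 64*T*U^5 + 56*T^2 - 224*T^2*U + 368*T^2*U^2 - 320*T^2*U^3 + 152*T^2*U^4 - 32*T^2*U^5 + 16*T^3 - 48*T^3*U + 96*T^3*U^2 - 112*T^3*U^3 + 48*T^3*U^4 - 4*T^4 - 8*T^4*U + 24*T^4*U^2 - 8*T^4*U^3 - 4*T^4*U^4), (14 - 68*U + 108*U^2 - 68*U^3 + 14*U^4 + 40*T - 160*T*U + 240*T*U^2 - 160*T*U^3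 + 40*T*U^4 + 36*T^2 - 120*T^2*U + 168*T^2*U^2 - 120*T^2*U^3 + 36*T^2*U^4 + 8*T^3 - 32*T^3*U + 48*T^3*U^2 - 32*T^3*U^3 + 8*T^3*U^4 - 2*T^4 - 4*T^4*U + 12*T^4*U^2 - 4*T^4*U^3 - 2*T^4*U^4):] e"
  unfolding FF_def sg0_def sg1_def sg2_def sg3_def sg4_def C0_def C1_def C2_def C3_def C4_def VV_def
  by (simp add: field_simps) algebra

lemma lp_P3_23:
  fixes t u :: real
  assumes "u \<noteq> 0"
  defines "T \<equiv> complex_of_real t" and "U \<equiv> complex_of_real u"
  shows "lpoly (complexify4 (gG t u)) (mk4 1 U 1 U) ((\<lambda>i. mk4 0 1 0 (-1) i + mk4 1 0 1 0 i)) = [:0, 0, (6 - 60*U + 230*U^2 - 420*U^3 + 386*U^4 - 168*U^5 + 26*U^6 + 24*T - 168*T*U + 424*T*U^2 - 528*T*U^3 + 376*T*U^4 - 168*T*U^5 + 40*T*U^6 + 28*T^2 - 128*T^2*U + 236*T^2*U^2 - 248*T^2*U^3 + 164*T^2*U^4 - 56*T^2*U^5 + 4*T^2*U^6 + 8*T^3 - 24*T^3*U + 56*T^3*U^2 - 80*T^3*U^3 + 40*T^3*U^4 + 8*T^3*U^5 - 8*T^3*U^6 - 2*T^4 - 4*T^4*U + 14*T^4*U^2 - 4*T^4*U^3 - 6*T^4*U^4 + 2*T^4*U^6), (12 - 88*U + 248*U^2 - 312*U^3 + 172*U^4 - 32*U^5 + 48*T - 272*T*U + 544*T*U^2 - 528*T*U^3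 + 272*T*U^4 - 64*T*U^5 + 56*T^2 - 224*T^2*U + 368*T^2*U^2 - 320*T^2*U^3 + 152*T^2*U^4 - 32*T^2*U^5 + 16*T^3 - 48*T^3*U + 96*T^3*U^2 - 112*T^3*U^3 + 48*T^3*U^4 - 4*T^4 - 8*T^4*U + 24*T^4*U^2 - 8*T^4*U^3 - 4*T^4*U^4), (14 - 68*U + 108*U^2 - 68*U^3 + 14*U^4 + 40*T - 160*T*U + 240*T*U^2 - 160*T*U^3 + 40*T*U^4 + 36*T^2 - 120*T^2*U + 168*T^2*U^2 - 120*T^2*U^3 + 36*T^2*U^4 + 8*T^3 - 32*T^3*U + 48*T^3*U^2 - 32*T^3*U^3 + 8*T^3*U^4 - 2*T^4 - 4*T^4*U + 12*T^4*U^2 - 4*T^4*U^3 - 2*T^4*U^4):]"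
  by (rule lpoly_f_eq[OF assms(1)]) (use ff_P3_23[of T U] in \<open>simp add: T_def U_def\<close>)

lemma ff_P1_P2: fixes T U e :: complex
  shows "FF T U (1 + e * U) (1 + e * U) (U + e * 1) (U + e * 1) = poly [:0, 0, (2 - 8*U^2 + 12*U^4 - 8*U^6 + 2*U^8 - 8*T + 32*T*U^2 - 48*T*U^4 + 32*T*U^6 - 8*T*U^8 + 12*T^2 - 48*T^2*U^2 + 72*T^2*U^4 - 48*T^2*U^6 + 12*T^2*U^8 - 8*T^3 + 32*T^3*U^2 - 48*T^3*U^4 + 32*T^3*U^6 - 8*T^3*U^8 + 2*T^4 - 8*T^4*U^2 + 12*T^4*U^4 - 8*T^4*U^6 + 2*T^4*U^8), 0, 0:] e"
  unfolding FF_def sg0_def sg1_def sg2_def sg3_def sg4_def C0_def C1_def C2_def C3_def C4_def VV_def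
  by (simp add: field_simps) algebra

lemma lp_P1_P2:
  fixes t u :: real
  assumes "u \<noteq> 0"
  defines "T \<equiv> complex_of_real t" and "U \<equiv> complex_of_real u"
  shows "lpoly (complexify4 (gG t u)) (mk4 1 1 U U) (mk4 U U 1 1) = [:0, 0, (2 - 8*U^2 + 12*U^4 - 8*U^6 + 2*U^8 - 8*T + 32*T*U^2 - 48*T*U^4 + 32*T*U^6 - 8*T*U^8 + 12*T^2 - 48*T^2*U^2 + 72*T^2*U^4 - 48*T^2*U^6 + 12*T^2*U^8 - 8*T^3 + 32*T^3*U^2 - 48*T^3*U^4 + 32*T^3*U^6 - 8*T^3*U^8 + 2*T^4 - 8*T^4*U^2 + 12*T^4*U^4 - 8*T^4*U^6 + 2*T^4*U^8), 0, 0:]"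
  by (rule lpoly_f_eq[OF assms(1)]) (use ff_P1_P2[of T U] in \<open>simp add: T_def U_def\<close>)

lemma ff_P2_P1: fixes T U e :: complex
  shows "FF T U (U + e * 1) (U + e * 1) (1 + e * U) (1 + e * U) = poly [:0, 0, (2 - 8*U^2 + 12*U^4 - 8*U^6 + 2*U^8 - 8*T + 32*T*U^2 - 48*T*U^4 + 32*T*U^6 - 8*T*U^8 + 12*T^2 - 48*T^2*U^2 + 72*T^2*U^4 - 48*T^2*U^6 + 12*T^2*U^8 - 8*T^3 + 32*T^3*U^2 - 48*T^3*U^4 + 32*T^3*U^6 - 8*T^3*U^8 + 2*T^4 - 8*T^4*U^2 + 12*T^4*U^4 - 8*T^4*U^6 + 2*T^4*U^8), 0, 0:] e"
  unfolding FF_def sg0_def sg1_def sg2_def sg3_def sg4_def C0_def C1_def C2_def C3_def C4_def VV_def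
  by (simp add: field_simps) algebra

lemma lp_P2_P1:
  fixes t u :: real
  assumes "u \<noteq> 0"
  defines "T \<equiv> complex_of_real t" and "U \<equiv> complex_of_real u"
  shows "lpoly (complexify4 (gG t u)) (mk4 U U 1 1) (mk4 1 1 U U) = [:0, 0, (2 - 8*U^2 + 12*U^4 - 8*U^6 + 2*U^8 - 8*T + 32*T*U^2 - 48*T*U^4 + 32*T*U^6 - 8*T*U^8 + 12*T^2 - 48*T^2*U^2 + 72*T^2*U^4 - 48*T^2*U^6 + 12*T^2*U^8 - 8*T^3 + 32*T^3*U^2 - 48*T^3*U^4 + 32*T^3*U^6 - 8*T^3*U^8 + 2*T^4 - 8*T^4*U^2 + 12*T^4*U^4 - 8*T^4*U^6 + 2*T^4*U^8), 0, 0:]"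
  by (rule lpoly_f_eq[OF assms(1)]) (use ff_P2_P1[of T U] in \<open>simp add: T_def U_def\<close>)

lemma ff_P1_P3: fixes T U e :: complex
  shows "FF T U (1 + e * 1) (1 + e * U) (U + e * 1) (U + e * U) = poly [:0, 0, (8 - 72*U + 274*U^2 - 576*U^3 + 732*U^4 - 576*U^5 + 274*U^6 - 72*U^7 + 8*U^8 + 16*T - 120*T*U + 392*T*U^2 - 744*T*U^3 + 912*T*U^4 - 744*T*U^5 + 392*T*U^6 - 120*T*U^7 + 16*T*U^8 + 8*T^2 - 56*T^2*U + 188*T^2*U^2 - 376*T^2*U^3 + 472*T^2*U^4 - 376*T^2*U^5 + 188*T^2*U^6 - 56*T^2*U^7 + 8*T^2*U^8 - 8*T^3*U + 40*T^3*U^2 - 88*T^3*U^3 + 112*T^3*U^4 - 88*T^3*U^5 + 40*T^3*U^6 - 8*T^3*U^7 + 2*T^4*U^2 - 8*T^4*U^3 + 12*T^4*U^4 - 8*T^4*U^5 + 2*T^4*U^6), 0, 0:] e"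
  unfolding FF_def sg0_def sg1_def sg2_def sg3_def sg4_def C0_def C1_def C2_def C3_def C4_def VV_def
  by (simp add: field_simps) algebra

lemma lp_P1_P3:
  fixes t u :: real
  assumes "u \<noteq> 0"
  defines "T \<equiv> complex_of_real t" and "U \<equiv> complex_of_real u"
  shows "lpoly (complexify4 (gG t u)) (mk4 1 1 U U) (mk4 1 U 1 U) = [:0, 0, (8 - 72*U + 274*U^2 - 576*U^3 + 732*U^4 - 576*U^5 + 274*U^6 - 72*U^7 + 8*U^8 + 16*T - 120*T*U + 392*T*U^2 - 744*T*U^3 + 912*T*U^4 - 744*T*U^5 + 392*T*U^6 - 120*T*U^7 + 16*T*U^8 + 8*T^2 - 56*T^2*U + 188*T^2*U^2 - 376*T^2*U^3 + 472*T^2*U^4 - 376*T^2*U^5 + 188*T^2*U^6 - 56*T^2*U^7 + 8*T^2*U^8 - 8*T^3*U + 40*T^3*U^2 - 88*T^3*U^3 + 112*T^3*U^4 - 88*T^3*U^5 + 40*T^3*U^6 - 8*T^3*U^7 + 2*T^4*U^2 - 8*T^4*U^3 + 12*T^4*U^4 - 8*T^4*U^5 + 2*T^4*U^6), 0, 0:]"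
  by (rule lpoly_f_eq[OF assms(1)]) (use ff_P1_P3[of T U] in \<open>simp add: T_def U_def\<close>)

lemma ff_P3_P1: fixes T U e :: complex
  shows "FF T U (1 + e * 1) (U + e * 1) (1 + e * U) (U + e * U) = poly [:0, 0, (8 - 72*U + 274*U^2 - 576*U^3 + 732*U^4 - 576*U^5 + 274*U^6 - 72*U^7 + 8*U^8 + 16*T - 120*T*U + 392*T*U^2 - 744*T*U^3 + 912*T*U^4 - 744*T*U^5 + 392*T*U^6 - 120*T*U^7 + 16*T*U^8 + 8*T^2 - 56*T^2*U + 188*T^2*U^2 - 376*T^2*U^3 + 472*T^2*U^4 - 376*T^2*U^5 + 188*T^2*U^6 - 56*T^2*U^7 + 8*T^2*U^8 - 8*T^3*U + 40*T^3*U^2 - 88*T^3*U^3 + 112*T^3*U^4 - 88*T^3*U^5 + 40*T^3*U^6 - 8*T^3*U^7 + 2*T^4*U^2 - 8*T^4*U^3 + 12*T^4*U^4 - 8*T^4*U^5 + 2*T^4*U^6), 0, 0:] e"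
  unfolding FF_def sg0_def sg1_def sg2_def sg3_def sg4_def C0_def C1_def C2_def C3_def C4_def VV_def
  by (simp add: field_simps) algebra

lemma lp_P3_P1:
  fixes t u :: real
  assumes "u \<noteq> 0"
  defines "T \<equiv> complex_of_real t" and "U \<equiv> complex_of_real u"
  shows "lpoly (complexify4 (gG t u)) (mk4 1 U 1 U) (mk4 1 1 U U) = [:0, 0, (8 - 72*U + 274*U^2 - 576*U^3 + 732*U^4 - 576*U^5 + 274*U^6 - 72*U^7 + 8*U^8 + 16*T - 120*T*U + 392*T*U^2 - 744*T*U^3 + 912*T*U^4 - 744*T*U^5 + 392*T*U^6 - 120*T*U^7 + 16*T*U^8 + 8*T^2 - 56*T^2*U + 188*T^2*U^2 - 376*T^2*U^3 + 472*T^2*U^4 - 376*T^2*U^5 + 188*T^2*U^6 - 56*T^2*U^7 + 8*T^2*U^8 - 8*T^3*U + 40*T^3*U^2 - 88*T^3*U^3 + 112*T^3*U^4 - 88*T^3*U^5 + 40*T^3*U^6 - 8*T^3*U^7 + 2*T^4*U^2 - 8*T^4*U^3 + 12*T^4*U^4 - 8*T^4*U^5 + 2*T^4*U^6), 0, 0:]"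
  by (rule lpoly_f_eq[OF assms(1)]) (use ff_P3_P1[of T U] in \<open>simp add: T_def U_def\<close>)

lemma ff_P2_P3: fixes T U e :: complex
  shows "FF T U (U + e * 1) (U + e * U) (1 + e * 1) (1 + e * U) = poly [:0, 0, (8 - 72*U + 274*U^2 - 576*U^3 + 732*U^4 - 576*U^5 + 274*U^6 - 72*U^7 + 8*U^8 + 16*T - 120*T*U + 392*T*U^2 - 744*T*U^3 + 912*T*U^4 - 744*T*U^5 + 392*T*U^6 - 120*T*U^7 + 16*T*U^8 + 8*T^2 - 56*T^2*U + 188*T^2*U^2 - 376*T^2*U^3 + 472*T^2*U^4 - 376*T^2*U^5 + 188*T^2*U^6 - 56*T^2*U^7 + 8*T^2*U^8 - 8*T^3*U + 40*T^3*U^2 - 88*T^3*U^3 + 112*T^3*U^4 - 88*T^3*U^5 + 40*T^3*U^6 - 8*T^3*U^7 + 2*T^4*U^2 - 8*T^4*U^3 + 12*T^4*U^4 - 8*T^4*U^5 + 2*T^4*U^6), 0, 0:] e"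
  unfolding FF_def sg0_def sg1_def sg2_def sg3_def sg4_def C0_def C1_def C2_def C3_def C4_def VV_def
  by (simp add: field_simps) algebra

lemma lp_P2_P3:
  fixes t u :: real
  assumes "u \<noteq> 0"
  defines "T \<equiv> complex_of_real t" and "U \<equiv> complex_of_real u"
  shows "lpoly (complexify4 (gG t u)) (mk4 U U 1 1) (mk4 1 U 1 U) = [:0, 0, (8 - 72*U + 274*U^2 - 576*U^3 + 732*U^4 - 576*U^5 + 274*U^6 - 72*U^7 + 8*U^8 + 16*T - 120*T*U + 392*T*U^2 - 744*T*U^3 + 912*T*U^4 - 744*T*U^5 + 392*T*U^6 - 120*T*U^7 + 16*T*U^8 + 8*T^2 - 56*T^2*U + 188*T^2*U^2 - 376*T^2*U^3 + 472*T^2*U^4 - 376*T^2*U^5 + 188*T^2*U^6 - 56*T^2*U^7 + 8*T^2*U^8 - 8*T^3*U + 40*T^3*U^2 - 88*T^3*U^3 + 112*T^3*U^4 - 88*T^3*U^5 + 40*T^3*U^6 - 8*T^3*U^7 + 2*T^4*U^2 - 8*T^4*U^3 + 12*T^4*U^4 - 8*T^4*U^5 + 2*T^4*U^6), 0, 0:]"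
  by (rule lpoly_f_eq[OF assms(1)]) (use ff_P2_P3[of T U] in \<open>simp add: T_def U_def\<close>)

lemma ff_P3_P2: fixes T U e :: complex
  shows "FF T U (1 + e * U) (U + e * U) (1 + e * 1) (U + e * 1) = poly [:0, 0, (8 - 72*U + 274*U^2 - 576*U^3 + 732*U^4 - 576*U^5 + 274*U^6 - 72*U^7 + 8*U^8 + 16*T - 120*T*U + 392*T*U^2 - 744*T*U^3 + 912*T*U^4 - 744*T*U^5 + 392*T*U^6 - 120*T*U^7 + 16*T*U^8 + 8*T^2 - 56*T^2*U + 188*T^2*U^2 - 376*T^2*U^3 + 472*T^2*U^4 - 376*T^2*U^5 + 188*T^2*U^6 - 56*T^2*U^7 + 8*T^2*U^8 - 8*T^3*U + 40*T^3*U^2 - 88*T^3*U^3 + 112*T^3*U^4 - 88*T^3*U^5 + 40*T^3*U^6 - 8*T^3*U^7 + 2*T^4*U^2 - 8*T^4*U^3 + 12*T^4*U^4 - 8*T^4*U^5 + 2*T^4*U^6), 0, 0:] e"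
  unfolding FF_def sg0_def sg1_def sg2_def sg3_def sg4_def C0_def C1_def C2_def C3_def C4_def VV_def
  by (simp add: field_simps) algebra

lemma lp_P3_P2:
  fixes t u :: real
  assumes "u \<noteq> 0"
  defines "T \<equiv> complex_of_real t" and "U \<equiv> complex_of_real u"
  shows "lpoly (complexify4 (gG t u)) (mk4 1 U 1 U) (mk4 U U 1 1) = [:0, 0, (8 - 72*U + 274*U^2 - 576*U^3 + 732*U^4 - 576*U^5 + 274*U^6 - 72*U^7 + 8*U^8 + 16*T - 120*T*U + 392*T*U^2 - 744*T*U^3 + 912*T*U^4 - 744*T*U^5 + 392*T*U^6 - 120*T*U^7 + 16*T*U^8 + 8*T^2 - 56*T^2*U + 188*T^2*U^2 - 376*T^2*U^3 + 472*T^2*U^4 - 376*T^2*U^5 + 188*T^2*U^6 - 56*T^2*U^7 + 8*T^2*U^8 - 8*T^3*U + 40*T^3*U^2 - 88*T^3*U^3 + 112*T^3*U^4 - 88*T^3*U^5 + 40*T^3*U^6 - 8*T^3*U^7 + 2*T^4*U^2 - 8*T^4*U^3 + 12*T^4*U^4 - 8*T^4*U^5 + 2*T^4*U^6), 0, 0:]"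
  by (rule lpoly_f_eq[OF assms(1)]) (use ff_P3_P2[of T U] in \<open>simp add: T_def U_def\<close>)

lemma ffsum_P1_P2: fixes T U :: complex
  shows "FF T U (1 + U) (1 + U) (U + 1) (U + 1) = 2*(T-1)^4*(U-1)^4*(U+1)^4"
  unfolding FF_def sg0_def sg1_def sg2_def sg3_def sg4_def C0_def C1_def C2_def C3_def C4_def VV_def
  by (simp add: field_simps) algebra

lemma ffsum_P1_P3: fixes T U :: complex
  shows "FF T U (1 + 1) (1 + U) (U + 1) (U + U) = 2*(U-1)^4*(T*U+U-2)^2*(T+1-2*U)^2"
  unfolding FF_def sg0_def sg1_def sg2_def sg3_def sg4_def C0_def C1_def C2_def C3_def C4_def VV_def
  by (simp add: field_simps) algebra

lemma ffsum_P2_P3: fixes T U :: complex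
  shows "FF T U (U + 1) (U + U) (1 + 1) (1 + U) = 2*(U-1)^4*(T*U+U-2)^2*(T+1-2*U)^2"
  unfolding FF_def sg0_def sg1_def sg2_def sg3_def sg4_def C0_def C1_def C2_def C3_def C4_def VV_def
  by (simp add: field_simps) algebra



definition good :: "real \<Rightarrow> real \<Rightarrow> bool" where
  "good t u \<longleftrightarrow> t \<noteq> 1 \<and> u \<noteq> 0 \<and> u \<noteq> 1 \<and> u \<noteq> -1 \<and> VV t u > 0"

lemma VV_lin1:
  fixes t u :: real
  assumes "VV t u > 0" shows "t*u + u - 2 \<noteq> 0"
proof
  assume h: "t*u + u - 2 = 0"
  have eq: "(t+1)^2 * VV t u = - ((t-1)^2 * (t+3)^2)"
    using h unfolding VV_def by algebra
  have "t \<noteq> -1" using h by auto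
  then have "(t+1)^2 > 0" by simp
  then have "(t+1)^2 * VV t u > 0" using assms by simp
  then have "- ((t-1)^2 * (t+3)^2) > 0" using eq by simp
  moreover have "(t-1)^2 * (t+3)^2 \<ge> 0" by simp
  ultimately show False by linarith
qed

lemma VV_lin2:
  fixes t u :: real
  assumes "VV t u > 0" shows "t + 1 - 2*u \<noteq> 0"
proof
  assume h: "t + 1 - 2*u = 0"
  have "VV t u = - 4 * ((u-1)^2 * (u+1)^2)"
    using h unfolding VV_def by algebra
  then have "VV t u \<le> 0" by simp
  with assms show False by simp
qed

lemma VF_VV:
  fixes t u :: real
  assumes "u \<noteq> 0" "u \<noteq> 1" "VF t (omega u) > 0"
  shows "VV t u > 0"
proof -
  have w: "u * omega u = (u-1)^2" using uomega[OF assms(1)] .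
  have "u^2 * VF t (omega u) = (u-1)^2 * VV t u"
    using w unfolding VF_def VV_def by algebra
  moreover have "u^2 * VF t (omega u) > 0" using assms by simp
  ultimately have "(u-1)^2 * VV t u > 0" by simp
  then show ?thesis using zero_less_mult_pos by (metis zero_le_power2 antisym_conv2 mult_eq_0_iff) 
qed

lemma good_nz:
  assumes "good t u"
  defines "T \<equiv> complex_of_real t" and "U \<equiv> complex_of_real u"
  shows "U \<noteq> 0" "U - 1 \<noteq> 0" "U + 1 \<noteq> 0" "T - 1 \<noteq> 0" "VV T U \<noteq> 0"
    "T*U + U - 2 \<noteq> 0" "T + 1 - 2*U \<noteq> 0"
proof -
  have g: "t \<noteq> 1" "u \<noteq> 0" "u \<noteq> 1" "u \<noteq> -1" "VV t u > 0" using assms(1) by (auto simp: good_def)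
  have e1: "VV T U = of_real (VV t u)" by (simp add: VV_def T_def U_def)
  have e2: "T*U + U - 2 = of_real (t*u + u - 2)" by (simp add: T_def U_def)
  have e3: "T + 1 - 2*U = of_real (t + 1 - 2*u)" by (simp add: T_def U_def)
  have e4: "U - 1 = of_real (u - 1)" "U + 1 = of_real (u + 1)" "T - 1 = of_real (t - 1)"
    by (simp_all add: T_def U_def)
  show "U \<noteq> 0" using g by (simp add: U_def)
  show "U - 1 \<noteq> 0" using g e4 by (simp del: of_real_diff)
  show "U + 1 \<noteq> 0" using g e4 by (simp del: of_real_add)
  show "T - 1 \<noteq> 0" using g e4 by (simp del: of_real_diff)
  show "VV T U \<noteq> 0" using g e1 by simp
  show "T*U + U - 2 \<noteq> 0" using VV_lin1[OF g(5)] e2 by (simp del: of_real_diff of_real_add of_real_mult)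
  show "T + 1 - 2*U \<noteq> 0" using VV_lin2[OF g(5)] e3 by (simp del: of_real_diff of_real_add of_real_mult)
qed

lemma coeff2_zero_prod:
  fixes a b :: "mono4 \<Rightarrow>\<^sub>0 complex"
  assumes "cpev a P = 0" "cpev b P = 0"
  shows "coeff (lpoly (a * b) P v) 2 = coeff (lpoly a P v) 1 * coeff (lpoly b P v) 1"
proof -
  have "coeff (lpoly (a * b) P v) 2 = (\<Sum>i\<le>2. coeff (lpoly a P v) i * coeff (lpoly b P v) (2 - i))"
    by (simp add: lpoly_mult coeff_mult)
  also have "\<dots> = coeff (lpoly a P v) 0 * coeff (lpoly b P v) 2 + coeff (lpoly a P v) 1 * coeff (lpoly b P v) 1
      + coeff (lpoly a P v) 2 * coeff (lpoly b P v) 0"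
    by (simp add: numeral_2_eq_2 atMost_Suc)
  finally show ?thesis using assms by (simp add: coeff0_lpoly)
qed

lemma coeff1_lprod:
  fixes a b :: "mono4 \<Rightarrow>\<^sub>0 complex"
  shows "coeff (lpoly (a * b) P v) 1 = cpev a P * coeff (lpoly b P v) 1 + coeff (lpoly a P v) 1 * cpev b P"
  by (simp add: lpoly_mult coeff_mult coeff0_lpoly)

lemma rank_alg:
  fixes x1 x2 x3 y1 y2 y3 :: complex
  assumes "x1*y1 \<noteq> 0" "x2*y2 \<noteq> 0" "x3*y3 \<noteq> 0"
    "x1*y2 + x2*y1 = 0" "x1*y3 + x3*y1 = 0" "x2*y3 + x3*y2 = 0"
  shows False
proof -
  have "x1*y2*(x2*y3)*(x3*y1) = (-(x2*y1))*(-(x3*y2))*(-(x1*y3))"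
  proof -
    have "x1*y2 = -(x2*y1)" "x2*y3 = -(x3*y2)" "x3*y1 = -(x1*y3)"
      using assms(4-6) by (simp_all add: eq_neg_iff_add_eq_0 add.commute)
    then show ?thesis by simp
  qed
  then have "2 * (x1*y1*(x2*y2)*(x3*y3)) = 0" by algebra
  then show False using assms(1-3) by simp
qed

lemma typeI_generic:
  fixes a b :: "mono4 \<Rightarrow>\<^sub>0 complex"
  assumes "cpev a P = 0" "cpev b P = 0"
    and "coeff (lpoly (a*b) P v1) 2 = h1" "coeff (lpoly (a*b) P v2) 2 = h2" "coeff (lpoly (a*b) P v3) 2 = h3"
    and "coeff (lpoly (a*b) P (\<lambda>i. v1 i + v2 i)) 2 = h1 + h2"
    and "coeff (lpoly (a*b) P (\<lambda>i. v1 i + v3 i)) 2 = h1 + h3"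
    and "coeff (lpoly (a*b) P (\<lambda>i. v2 i + v3 i)) 2 = h2 + h3"
    and "h1 \<noteq> 0" "h2 \<noteq> 0" "h3 \<noteq> 0"
  shows False
proof -
  define A where "A v = coeff (lpoly a P v) 1" for v
  define B where "B v = coeff (lpoly b P v) 1" for v
  have c2: "coeff (lpoly (a*b) P v) 2 = A v * B v" for v
    unfolding A_def B_def by (rule coeff2_zero_prod[OF assms(1,2)])
  have la: "A (\<lambda>i. v i + w i) = A v + A w" for v w unfolding A_def by (rule coeff1_lpoly_add)
  have lb: "B (\<lambda>i. v i + w i) = B v + B w" for v w unfolding B_def by (rule coeff1_lpoly_add)
  show False
  proof (rule rank_alg[of "A v1" "B v1" "A v2" "B v2" "A v3" "B v3"])
    show "A v1 * B v1 \<noteq> 0" "A v2 * B v2 \<noteq> 0" "A v3 * B v3 \<noteq> 0"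
      using assms c2 by auto
    show "A v1 * B v2 + A v2 * B v1 = 0"
      using assms(3,4,6) c2[of v1] c2[of v2] c2[of "\<lambda>i. v1 i + v2 i"] la[of v1 v2] lb[of v1 v2]
      by (simp add: algebra_simps)
    show "A v1 * B v3 + A v3 * B v1 = 0"
      using assms(3,5,7) c2[of v1] c2[of v3] c2[of "\<lambda>i. v1 i + v3 i"] la[of v1 v3] lb[of v1 v3]
      by (simp add: algebra_simps)
    show "A v2 * B v3 + A v3 * B v2 = 0"
      using assms(4,5,8) c2[of v2] c2[of v3] c2[of "\<lambda>i. v2 i + v3 i"] la[of v2 v3] lb[of v2 v3]
      by (simp add: algebra_simps)
  qed
qed

lemma pair_generic:
  fixes a :: "mono4 \<Rightarrow>\<^sub>0 complex"
  assumes hom: "hom4 k a" and k: "1 \<le> k" "k \<le> 3"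
    and z: "cpev a p = 0" "cpev a q = 0" "coeff (lpoly a p q) 1 = 0" "coeff (lpoly a q p) 1 = 0"
  shows "cpev a (\<lambda>i. p i + q i) = 0"
proof -
  define G where "G = lpoly a p q"
  define H where "H = lpoly a q p"
  have dG: "degree G \<le> 3" using degree_lpoly[OF hom] k unfolding G_def by (meson order_trans)
  have dH: "degree H \<le> 3" using degree_lpoly[OF hom] k unfolding H_def by (meson order_trans)
  have pG: "poly G r = coeff G 2 * r^2 + coeff G 3 * r^3" for r
  proof -
    have "poly G r = (\<Sum>i\<le>degree G. coeff G i * r ^ i)" by (rule poly_altdef)
    also have "\<dots> = (\<Sum>i\<le>3. coeff G i * r ^ i)"
      by (rule sum.mono_neutral_left) (use dG in \<open>auto simp: coeff_eq_0\<close>)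
    finally have "poly G r = (\<Sum>i\<le>3. coeff G i * r ^ i)" .
    moreover have "coeff G 0 = 0" "coeff G 1 = 0" using z unfolding G_def by (simp_all add: coeff0_lpoly)
    ultimately show ?thesis
      by (simp add: numeral_3_eq_3 numeral_2_eq_2 atMost_Suc algebra_simps)
  qed
  have pH: "poly H r = coeff H 2 * r^2 + coeff H 3 * r^3" for r
  proof -
    have "poly H r = (\<Sum>i\<le>degree H. coeff H i * r ^ i)" by (rule poly_altdef)
    also have "\<dots> = (\<Sum>i\<le>3. coeff H i * r ^ i)"
      by (rule sum.mono_neutral_left) (use dH in \<open>auto simp: coeff_eq_0\<close>)
    finally have "poly H r = (\<Sum>i\<le>3. coeff H i * r ^ i)" .
    moreover have "coeff H 0 = 0" "coeff H 1 = 0" using z unfolding H_def by (simp_all add: coeff0_lpoly)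
    ultimately show ?thesis
      by (simp add: numeral_3_eq_3 numeral_2_eq_2 atMost_Suc algebra_simps)
  qed
  have rel: "poly G r = r ^ k * poly H (1 / r)" if "r \<noteq> 0" for r
  proof -
    have "poly G r = cpev a (\<lambda>i. r * (q i + (1/r) * p i))"
      unfolding G_def poly_lpoly using that by (simp add: algebra_simps)
    also have "\<dots> = r ^ k * cpev a (\<lambda>i. q i + (1/r) * p i)"
      by (rule cpev_scale[OF hom])
    also have "\<dots> = r ^ k * poly H (1 / r)" unfolding H_def poly_lpoly ..
    finally show ?thesis .
  qed
  have g1: "cpev a (\<lambda>i. p i + q i) = poly G 1" unfolding G_def poly_lpoly by simp
  define g2 g3 h2 h3 where "g2 = coeff G 2" "g3 = coeff G 3" "h2 = coeff H 2" "h3 = coeff H 3"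
  have e: "g2 * r^2 + g3 * r^3 = r^k * (h2 * (1/r)^2 + h3 * (1/r)^3)" if "r \<noteq> 0" for r
    using rel[OF that] pG pH unfolding g2_g3_h2_h3_def by simp
  have e1: "g2 + g3 = h2 + h3" and em1: "g2 - g3 = (-1)^k * (h2 - h3)"
    and e2: "4*g2 + 8*g3 = 2^k * (h2/4 + h3/8)" and em2: "4*g2 - 8*g3 = (-2)^k * (h2/4 - h3/8)"
    using e[of 1] e[of "-1"] e[of 2] e[of "-2"] by (simp_all add: power_divide field_simps)
  have "g2 + g3 = 0"
  proof -
    consider "k = 1" | "k = 2" | "k = 3" using k by linarith
    then show ?thesis
    proof cases
      case 1
      then have "degree G \<le> 1" using degree_lpoly[OF hom] unfolding G_def by simp
      then show ?thesis unfolding g2_g3_h2_h3_def by (simp add: coeff_eq_0)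
    next
      case 2
      then have "degree G \<le> 2" "degree H \<le> 2" using degree_lpoly[OF hom] unfolding G_def H_def by simp_all
      then have "g3 = 0" "h3 = 0" unfolding g2_g3_h2_h3_def by (simp_all add: coeff_eq_0)
      then show ?thesis using e1 e2 2 by simp
    next
      case 3
      then have "g2 + g3 = h2 + h3" "g2 + h2 = g3 + h3" "g2 * 32 + g3 * 64 = h3 * 8 + h2 * 16" "h2 * 16 + g2 * 32 = h3 * 8 + g3 * 64"
        using e1 em1 e2 em2 by (simp_all add: field_simps)
      then show ?thesis by algebra
    qed
  qed
  then show ?thesis using g1 pG unfolding g2_g3_h2_h3_def by simp
qed

lemma singular_factor:
  fixes a b :: "mono4 \<Rightarrow>\<^sub>0 complex"
  assumes "cpev a p = 0" "cpev b p \<noteq> 0" "coeff (lpoly (a * b) p q) 1 = 0"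
  shows "coeff (lpoly a p q) 1 = 0"
  using assms coeff1_lprod[of a b p q] by simp

lemma pair_contra:
  fixes a b F :: "mono4 \<Rightarrow>\<^sub>0 complex"
  assumes ab: "a * b = F" and hom: "hom4 k a" and k: "1 \<le> k" "k \<le> 3"
    and z: "cpev a p = 0" "cpev a q = 0" "cpev b p \<noteq> 0" "cpev b q \<noteq> 0"
    and c: "coeff (lpoly F p q) 1 = 0" "coeff (lpoly F q p) 1 = 0"
    and nz: "cpev F (\<lambda>i. p i + q i) \<noteq> 0"
  shows False
proof -
  have "coeff (lpoly a p q) 1 = 0" by (rule singular_factor[of a p b q]) (use z c ab in auto)
  moreover have "coeff (lpoly a q p) 1 = 0" by (rule singular_factor[of a q b p]) (use z c ab in auto)
  ultimately have "cpev a (\<lambda>i. p i + q i) = 0" using pair_generic[OF hom k z(1,2)] by simp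
  moreover have "cpev F (\<lambda>i. p i + q i) = cpev a (\<lambda>i. p i + q i) * cpev b (\<lambda>i. p i + q i)"
    using ab cpev_mult by metis
  ultimately show False using nz by simp
qed



lemma typeI_P1:
  fixes t u :: real and a b :: "mono4 \<Rightarrow>\<^sub>0 complex"
  assumes g: "good t u" and ab: "a * b = complexify4 (gG t u)"
  defines "T \<equiv> complex_of_real t" and "U \<equiv> complex_of_real u"
  assumes za: "cpev a (mk4 1 1 U U) = 0" and zb: "cpev b (mk4 1 1 U U) = 0"
  shows False
proof -
  have u0: "u \<noteq> 0" using g by (simp add: good_def)
  note nz = good_nz[OF g, folded T_def U_def]
  have s12: "(30 - 228*U + 618*U^2 - 840*U^3 + 618*U^4 - 228*U^5 + 30*U^6 + 72*T - 336*T*U + 792*T*U^2 - 1056*T*U^3 + 792*T*U^4 - 336*T*U^5 + 72*T*U^6 + 20*T^2 - 184*T^2*U + 412*T^2*U^2 - 496*T^2*U^3 + 412*T^2*U^4 - 184*T^2*U^5 + 20*T^2*U^6 + 8*T^3 - 16*T^3*U + 88*T^3*U^2 - 160*T^3*U^3 + 88*T^3*U^4 - 16*T^3*U^5 + 8*T^3*U^6 - 2*T^4 - 4*T^4*U + 10*T^4*U^2 - 8*T^4*U^3 + 10*T^4*U^4 - 4*T^4*U^5 - 2*T^4*U^6) = 2*(U-1)^2*VV T U*(T*U+U-2)^2 + 2*(U-1)^2*VV T U*(T+1-2*U)^2" unfolding VV_def by algebra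
  have s13: "(24 - 168*U + 392*U^2 - 420*U^3 + 224*U^4 - 60*U^5 + 8*U^6 + 48*T - 168*T*U + 352*T*U^2 - 528*T*U^3 + 448*T*U^4 - 168*T*U^5 + 16*T*U^6 - 8*T^2 - 56*T^2*U + 200*T^2*U^2 - 248*T^2*U^3 + 200*T^2*U^4 - 128*T^2*U^5 + 40*T^2*U^6 + 8*T^3*U + 16*T^3*U^2 - 80*T^3*U^3 + 80*T^3*U^4 - 24*T^3*U^5 - 4*T^4*U^3 + 8*T^4*U^4 - 4*T^4*U^5) = 2*(U-1)^2*VV T U*(T*U+U-2)^2 + 2*(T-1)^4*U^2*(U-1)^2*(U+1)^2" unfolding VV_def by algebra
  have s23: "(6 - 60*U + 230*U^2 - 420*U^3 + 386*U^4 - 168*U^5 + 26*U^6 + 24*T - 168*T*U + 424*T*U^2 - 528*T*U^3 + 376*T*U^4 - 168*T*U^5 + 40*T*U^6 + 28*T^2 - 128*T^2*U + 236*T^2*U^2 - 248*T^2*U^3 + 164*T^2*U^4 - 56*T^2*U^5 + 4*T^2*U^6 + 8*T^3 - 24*T^3*U + 56*T^3*U^2 - 80*T^3*U^3 + 40*T^3*U^4 + 8*T^3*U^5 - 8*T^3*U^6 - 2*T^4 - 4*T^4*U + 14*T^4*U^2 - 4*T^4*U^3 - 6*T^4*U^4 + 2*T^4*U^6) = 2*(U-1)^2*VV T U*(T+1-2*U)^2 + 2*(T-1)^4*U^2*(U-1)^2*(U+1)^2" unfolding VV_def by algebra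
  show False
  proof (rule typeI_generic[OF za zb])
    show "coeff (lpoly (a * b) (mk4 1 1 U U) (mk4 1 (-1) 0 0)) 2 = 2*(U-1)^2*VV T U*(T*U+U-2)^2"
      unfolding ab T_def U_def lp_P1_1[OF u0] by (simp add: numeral_2_eq_2)
    show "coeff (lpoly (a * b) (mk4 1 1 U U) (mk4 0 0 1 (-1))) 2 = 2*(U-1)^2*VV T U*(T+1-2*U)^2"
      unfolding ab T_def U_def lp_P1_2[OF u0] by (simp add: numeral_2_eq_2)
    show "coeff (lpoly (a * b) (mk4 1 1 U U) (mk4 1 1 0 0)) 2 = 2*(T-1)^4*U^2*(U-1)^2*(U+1)^2"
      unfolding ab T_def U_def lp_P1_3[OF u0] by (simp add: numeral_2_eq_2)
    show "coeff (lpoly (a * b) (mk4 1 1 U U) (\<lambda>i. (mk4 1 (-1) 0 0) i + (mk4 0 0 1 (-1)) i)) 2 = 2*(U-1)^2*VV T U*(T*U+U-2)^2 + 2*(U-1)^2*VV T U*(T+1-2*U)^2"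
      unfolding ab T_def U_def lp_P1_12[OF u0] s12[symmetric, unfolded T_def U_def] by (simp add: numeral_2_eq_2)
    show "coeff (lpoly (a * b) (mk4 1 1 U U) (\<lambda>i. (mk4 1 (-1) 0 0) i + (mk4 1 1 0 0) i)) 2 = 2*(U-1)^2*VV T U*(T*U+U-2)^2 + 2*(T-1)^4*U^2*(U-1)^2*(U+1)^2"
      unfolding ab T_def U_def lp_P1_13[OF u0] s13[symmetric, unfolded T_def U_def] by (simp add: numeral_2_eq_2)
    show "coeff (lpoly (a * b) (mk4 1 1 U U) (\<lambda>i. (mk4 0 0 1 (-1)) i + (mk4 1 1 0 0) i)) 2 = 2*(U-1)^2*VV T U*(T+1-2*U)^2 + 2*(T-1)^4*U^2*(U-1)^2*(U+1)^2"
      unfolding ab T_def U_def lp_P1_23[OF u0] s23[symmetric, unfolded T_def U_def] by (simp add: numeral_2_eq_2)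
    show "2*(U-1)^2*VV T U*(T*U+U-2)^2 \<noteq> 0" using nz by simp
    show "2*(U-1)^2*VV T U*(T+1-2*U)^2 \<noteq> 0" using nz by simp
    show "2*(T-1)^4*U^2*(U-1)^2*(U+1)^2 \<noteq> 0" using nz by simp
  qed
qed

lemma fzero_P1:
  fixes t u :: real
  assumes g: "good t u"
  defines "U \<equiv> complex_of_real u"
  shows "cpev (complexify4 (gG t u)) (mk4 1 1 U U) = 0"
proof -
  have u0: "u \<noteq> 0" using g by (simp add: good_def)
  show ?thesis using arg_cong[OF lp_P1_1[OF u0], of "\<lambda>p. coeff p 0"] by (simp add: coeff0_lpoly U_def)
qed

lemma typeI_P2:
  fixes t u :: real and a b :: "mono4 \<Rightarrow>\<^sub>0 complex"
  assumes g: "good t u" and ab: "a * b = complexify4 (gG t u)"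
  defines "T \<equiv> complex_of_real t" and "U \<equiv> complex_of_real u"
  assumes za: "cpev a (mk4 U U 1 1) = 0" and zb: "cpev b (mk4 U U 1 1) = 0"
  shows False
proof -
  have u0: "u \<noteq> 0" using g by (simp add: good_def)
  note nz = good_nz[OF g, folded T_def U_def]
  have s12: "(30 - 228*U + 618*U^2 - 840*U^3 + 618*U^4 - 228*U^5 + 30*U^6 + 72*T - 336*T*U + 792*T*U^2 - 1056*T*U^3 + 792*T*U^4 - 336*T*U^5 + 72*T*U^6 + 20*T^2 - 184*T^2*U + 412*T^2*U^2 - 496*T^2*U^3 + 412*T^2*U^4 - 184*T^2*U^5 + 20*T^2*U^6 + 8*T^3 - 16*T^3*U + 88*T^3*U^2 - 160*T^3*U^3 + 88*T^3*U^4 - 16*T^3*U^5 + 8*T^3*U^6 - 2*T^4 - 4*T^4*U + 10*T^4*U^2 - 8*T^4*U^3 + 10*T^4*U^4 - 4*T^4*U^5 - 2*T^4*U^6) = 2*(U-1)^2*VV T U*(T+1-2*U)^2 + 2*(U-1)^2*VV T U*(T*U+U-2)^2" unfolding VV_def by algebra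
  have s13: "(8 - 60*U + 224*U^2 - 420*U^3 + 392*U^4 - 168*U^5 + 24*U^6 + 16*T - 168*T*U + 448*T*U^2 - 528*T*U^3 + 352*T*U^4 - 168*T*U^5 + 48*T*U^6 + 40*T^2 - 128*T^2*U + 200*T^2*U^2 - 248*T^2*U^3 + 200*T^2*U^4 - 56*T^2*U^5 - 8*T^2*U^6 - 24*T^3*U + 80*T^3*U^2 - 80*T^3*U^3 + 16*T^3*U^4 + 8*T^3*U^5 - 4*T^4*U + 8*T^4*U^2 - 4*T^4*U^3) = 2*(U-1)^2*VV T U*(T+1-2*U)^2 + 2*(T-1)^4*(U-1)^2*(U+1)^2" unfolding VV_def by algebra
  have s23: "(26 - 168*U + 386*U^2 - 420*U^3 + 230*U^4 - 60*U^5 + 6*U^6 + 40*T - 168*T*U + 376*T*U^2 - 528*T*U^3 + 424*T*U^4 - 168*T*U^5 + 24*T*U^6 + 4*T^2 - 56*T^2*U + 164*T^2*U^2 - 248*T^2*U^3 + 236*T^2*U^4 - 128*T^2*U^5 + 28*T^2*U^6 - 8*T^3 + 8*T^3*U + 40*T^3*U^2 - 80*T^3*U^3 + 56*T^3*U^4 - 24*T^3*U^5 + 8*T^3*U^6 + 2*T^4 - 6*T^4*U^2 - 4*T^4*U^3 + 14*T^4*U^4 - 4*T^4*U^5 - 2*T^4*U^6) = 2*(U-1)^2*VV T U*(T*U+U-2)^2 + 2*(T-1)^4*(U-1)^2*(U+1)^2" unfolding VV_def by algebra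
  show False
  proof (rule typeI_generic[OF za zb])
    show "coeff (lpoly (a * b) (mk4 U U 1 1) (mk4 1 (-1) 0 0)) 2 = 2*(U-1)^2*VV T U*(T+1-2*U)^2"
      unfolding ab T_def U_def lp_P2_1[OF u0] by (simp add: numeral_2_eq_2)
    show "coeff (lpoly (a * b) (mk4 U U 1 1) (mk4 0 0 1 (-1))) 2 = 2*(U-1)^2*VV T U*(T*U+U-2)^2"
      unfolding ab T_def U_def lp_P2_2[OF u0] by (simp add: numeral_2_eq_2)
    show "coeff (lpoly (a * b) (mk4 U U 1 1) (mk4 1 1 0 0)) 2 = 2*(T-1)^4*(U-1)^2*(U+1)^2"
      unfolding ab T_def U_def lp_P2_3[OF u0] by (simp add: numeral_2_eq_2)
    show "coeff (lpoly (a * b) (mk4 U U 1 1) (\<lambda>i. (mk4 1 (-1) 0 0) i + (mk4 0 0 1 (-1)) i)) 2 = 2*(U-1)^2*VV T U*(T+1-2*U)^2 + 2*(U-1)^2*VV T U*(T*U+U-2)^2"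
      unfolding ab T_def U_def lp_P2_12[OF u0] s12[symmetric, unfolded T_def U_def] by (simp add: numeral_2_eq_2)
    show "coeff (lpoly (a * b) (mk4 U U 1 1) (\<lambda>i. (mk4 1 (-1) 0 0) i + (mk4 1 1 0 0) i)) 2 = 2*(U-1)^2*VV T U*(T+1-2*U)^2 + 2*(T-1)^4*(U-1)^2*(U+1)^2"
      unfolding ab T_def U_def lp_P2_13[OF u0] s13[symmetric, unfolded T_def U_def] by (simp add: numeral_2_eq_2)
    show "coeff (lpoly (a * b) (mk4 U U 1 1) (\<lambda>i. (mk4 0 0 1 (-1)) i + (mk4 1 1 0 0) i)) 2 = 2*(U-1)^2*VV T U*(T*U+U-2)^2 + 2*(T-1)^4*(U-1)^2*(U+1)^2"
      unfolding ab T_def U_def lp_P2_23[OF u0] s23[symmetric, unfolded T_def U_def] by (simp add: numeral_2_eq_2)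
    show "2*(U-1)^2*VV T U*(T+1-2*U)^2 \<noteq> 0" using nz by simp
    show "2*(U-1)^2*VV T U*(T*U+U-2)^2 \<noteq> 0" using nz by simp
    show "2*(T-1)^4*(U-1)^2*(U+1)^2 \<noteq> 0" using nz by simp
  qed
qed

lemma fzero_P2:
  fixes t u :: real
  assumes g: "good t u"
  defines "U \<equiv> complex_of_real u"
  shows "cpev (complexify4 (gG t u)) (mk4 U U 1 1) = 0"
proof -
  have u0: "u \<noteq> 0" using g by (simp add: good_def)
  show ?thesis using arg_cong[OF lp_P2_1[OF u0], of "\<lambda>p. coeff p 0"] by (simp add: coeff0_lpoly U_def)
qed

lemma typeI_P3:
  fixes t u :: real and a b :: "mono4 \<Rightarrow>\<^sub>0 complex"
  assumes g: "good t u" and ab: "a * b = complexify4 (gG t u)"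
  defines "T \<equiv> complex_of_real t" and "U \<equiv> complex_of_real u"
  assumes za: "cpev a (mk4 1 U 1 U) = 0" and zb: "cpev b (mk4 1 U 1 U) = 0"
  shows False
proof -
  have u0: "u \<noteq> 0" using g by (simp add: good_def)
  note nz = good_nz[OF g, folded T_def U_def]
  have s12: "(30 - 228*U + 618*U^2 - 840*U^3 + 618*U^4 - 228*U^5 + 30*U^6 + 72*T - 336*T*U + 792*T*U^2 - 1056*T*U^3 + 792*T*U^4 - 336*T*U^5 + 72*T*U^6 + 20*T^2 - 184*T^2*U + 412*T^2*U^2 - 496*T^2*U^3 + 412*T^2*U^4 - 184*T^2*U^5 + 20*T^2*U^6 + 8*T^3 - 16*T^3*U + 88*T^3*U^2 - 160*T^3*U^3 + 88*T^3*U^4 - 16*T^3*U^5 + 8*T^3*U^6 - 2*T^4 - 4*T^4*U + 10*T^4*U^2 - 8*T^4*U^3 + 10*T^4*U^4 - 4*T^4*U^5 - 2*T^4*U^6) = 2*(U-1)^2*VV T U*(T*U+U-2)^2 + 2*(U-1)^2*VV T U*(T+1-2*U)^2" unfolding VV_def by algebra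
  have s13: "(24 - 168*U + 392*U^2 - 420*U^3 + 224*U^4 - 60*U^5 + 8*U^6 + 48*T - 168*T*U + 352*T*U^2 - 528*T*U^3 + 448*T*U^4 - 168*T*U^5 + 16*T*U^6 - 8*T^2 - 56*T^2*U + 200*T^2*U^2 - 248*T^2*U^3 + 200*T^2*U^4 - 128*T^2*U^5 + 40*T^2*U^6 + 8*T^3*U + 16*T^3*U^2 - 80*T^3*U^3 + 80*T^3*U^4 - 24*T^3*U^5 - 4*T^4*U^3 + 8*T^4*U^4 - 4*T^4*U^5) = 2*(U-1)^2*VV T U*(T*U+U-2)^2 + 2*(T-1)^4*U^2*(U-1)^2*(U+1)^2" unfolding VV_def by algebra
  have s23: "(6 - 60*U + 230*U^2 - 420*U^3 + 386*U^4 - 168*U^5 + 26*U^6 + 24*T - 168*T*U + 424*T*U^2 - 528*T*U^3 + 376*T*U^4 - 168*T*U^5 + 40*T*U^6 + 28*T^2 - 128*T^2*U + 236*T^2*U^2 - 248*T^2*U^3 + 164*T^2*U^4 - 56*T^2*U^5 + 4*T^2*U^6 + 8*T^3 - 24*T^3*U + 56*T^3*U^2 - 80*T^3*U^3 + 40*T^3*U^4 + 8*T^3*U^5 - 8*T^3*U^6 - 2*T^4 - 4*T^4*U + 14*T^4*U^2 - 4*T^4*U^3 - 6*T^4*U^4 + 2*T^4*U^6) = 2*(U-1)^2*VV T U*(T+1-2*U)^2 + 2*(T-1)^4*U^2*(U-1)^2*(U+1)^2" unfolding VV_def by algebra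
  show False
  proof (rule typeI_generic[OF za zb])
    show "coeff (lpoly (a * b) (mk4 1 U 1 U) (mk4 1 0 (-1) 0)) 2 = 2*(U-1)^2*VV T U*(T*U+U-2)^2"
      unfolding ab T_def U_def lp_P3_1[OF u0] by (simp add: numeral_2_eq_2)
    show "coeff (lpoly (a * b) (mk4 1 U 1 U) (mk4 0 1 0 (-1))) 2 = 2*(U-1)^2*VV T U*(T+1-2*U)^2"
      unfolding ab T_def U_def lp_P3_2[OF u0] by (simp add: numeral_2_eq_2)
    show "coeff (lpoly (a * b) (mk4 1 U 1 U) (mk4 1 0 1 0)) 2 = 2*(T-1)^4*U^2*(U-1)^2*(U+1)^2"
      unfolding ab T_def U_def lp_P3_3[OF u0] by (simp add: numeral_2_eq_2)
    show "coeff (lpoly (a * b) (mk4 1 U 1 U) (\<lambda>i. (mk4 1 0 (-1) 0) i + (mk4 0 1 0 (-1)) i)) 2 = 2*(U-1)^2*VV T U*(T*U+U-2)^2 + 2*(U-1)^2*VV T U*(T+1-2*U)^2"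
      unfolding ab T_def U_def lp_P3_12[OF u0] s12[symmetric, unfolded T_def U_def] by (simp add: numeral_2_eq_2)
    show "coeff (lpoly (a * b) (mk4 1 U 1 U) (\<lambda>i. (mk4 1 0 (-1) 0) i + (mk4 1 0 1 0) i)) 2 = 2*(U-1)^2*VV T U*(T*U+U-2)^2 + 2*(T-1)^4*U^2*(U-1)^2*(U+1)^2"
      unfolding ab T_def U_def lp_P3_13[OF u0] s13[symmetric, unfolded T_def U_def] by (simp add: numeral_2_eq_2)
    show "coeff (lpoly (a * b) (mk4 1 U 1 U) (\<lambda>i. (mk4 0 1 0 (-1)) i + (mk4 1 0 1 0) i)) 2 = 2*(U-1)^2*VV T U*(T+1-2*U)^2 + 2*(T-1)^4*U^2*(U-1)^2*(U+1)^2"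
      unfolding ab T_def U_def lp_P3_23[OF u0] s23[symmetric, unfolded T_def U_def] by (simp add: numeral_2_eq_2)
    show "2*(U-1)^2*VV T U*(T*U+U-2)^2 \<noteq> 0" using nz by simp
    show "2*(U-1)^2*VV T U*(T+1-2*U)^2 \<noteq> 0" using nz by simp
    show "2*(T-1)^4*U^2*(U-1)^2*(U+1)^2 \<noteq> 0" using nz by simp
  qed
qed

lemma fzero_P3:
  fixes t u :: real
  assumes g: "good t u"
  defines "U \<equiv> complex_of_real u"
  shows "cpev (complexify4 (gG t u)) (mk4 1 U 1 U) = 0"
proof -
  have u0: "u \<noteq> 0" using g by (simp add: good_def)
  show ?thesis using arg_cong[OF lp_P3_1[OF u0], of "\<lambda>p. coeff p 0"] by (simp add: coeff0_lpoly U_def)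
qed

lemma pairfacts_P1_P2:
  fixes t u :: real
  assumes g: "good t u"
  defines "U \<equiv> complex_of_real u"
  shows "coeff (lpoly (complexify4 (gG t u)) (mk4 1 1 U U) (mk4 U U 1 1)) 1 = 0"
    "coeff (lpoly (complexify4 (gG t u)) (mk4 U U 1 1) (mk4 1 1 U U)) 1 = 0"
    "cpev (complexify4 (gG t u)) (\<lambda>i. (mk4 1 1 U U) i + (mk4 U U 1 1) i) \<noteq> 0"
    "cpev (complexify4 (gG t u)) (\<lambda>i. (mk4 U U 1 1) i + (mk4 1 1 U U) i) \<noteq> 0"
proof -
  have u0: "u \<noteq> 0" using g by (simp add: good_def)
  note nz = good_nz[OF g, folded U_def]
  show "coeff (lpoly (complexify4 (gG t u)) (mk4 1 1 U U) (mk4 U U 1 1)) 1 = 0"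
    unfolding U_def lp_P1_P2[OF u0] by simp
  show "coeff (lpoly (complexify4 (gG t u)) (mk4 U U 1 1) (mk4 1 1 U U)) 1 = 0"
    unfolding U_def lp_P2_P1[OF u0] by simp
  have "cpev (complexify4 (gG t u)) (\<lambda>i. (mk4 1 1 U U) i + (mk4 U U 1 1) i) = FF (complex_of_real t) U (1 + U) (1 + U) (U + 1) (U + 1)"
    by (simp add: cpev_complexify cev_gG[OF u0] U_def)
  also have "\<dots> = 2*((complex_of_real t)-1)^4*(U-1)^4*(U+1)^4"
    by (rule ffsum_P1_P2)
  finally show "cpev (complexify4 (gG t u)) (\<lambda>i. (mk4 1 1 U U) i + (mk4 U U 1 1) i) \<noteq> 0"
    using nz by simp
  then show "cpev (complexify4 (gG t u)) (\<lambda>i. (mk4 U U 1 1) i + (mk4 1 1 U U) i) \<noteq> 0"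
    by (simp add: add.commute)
qed

lemma pairfacts_P1_P3:
  fixes t u :: real
  assumes g: "good t u"
  defines "U \<equiv> complex_of_real u"
  shows "coeff (lpoly (complexify4 (gG t u)) (mk4 1 1 U U) (mk4 1 U 1 U)) 1 = 0"
    "coeff (lpoly (complexify4 (gG t u)) (mk4 1 U 1 U) (mk4 1 1 U U)) 1 = 0"
    "cpev (complexify4 (gG t u)) (\<lambda>i. (mk4 1 1 U U) i + (mk4 1 U 1 U) i) \<noteq> 0"
    "cpev (complexify4 (gG t u)) (\<lambda>i. (mk4 1 U 1 U) i + (mk4 1 1 U U) i) \<noteq> 0"
proof -
  have u0: "u \<noteq> 0" using g by (simp add: good_def)
  note nz = good_nz[OF g, folded U_def]
  show "coeff (lpoly (complexify4 (gG t u)) (mk4 1 1 U U) (mk4 1 U 1 U)) 1 = 0"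
    unfolding U_def lp_P1_P3[OF u0] by simp
  show "coeff (lpoly (complexify4 (gG t u)) (mk4 1 U 1 U) (mk4 1 1 U U)) 1 = 0"
    unfolding U_def lp_P3_P1[OF u0] by simp
  have "cpev (complexify4 (gG t u)) (\<lambda>i. (mk4 1 1 U U) i + (mk4 1 U 1 U) i) = FF (complex_of_real t) U (1 + 1) (1 + U) (U + 1) (U + U)"
    by (simp add: cpev_complexify cev_gG[OF u0] U_def)
  also have "\<dots> = 2*(U-1)^4*((complex_of_real t)*U+U-2)^2*((complex_of_real t)+1-2*U)^2"
    by (rule ffsum_P1_P3)
  finally show "cpev (complexify4 (gG t u)) (\<lambda>i. (mk4 1 1 U U) i + (mk4 1 U 1 U) i) \<noteq> 0"
    using nz by simp
  then show "cpev (complexify4 (gG t u)) (\<lambda>i. (mk4 1 U 1 U) i + (mk4 1 1 U U) i) \<noteq> 0"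
    by (simp add: add.commute)
qed

lemma pairfacts_P2_P3:
  fixes t u :: real
  assumes g: "good t u"
  defines "U \<equiv> complex_of_real u"
  shows "coeff (lpoly (complexify4 (gG t u)) (mk4 U U 1 1) (mk4 1 U 1 U)) 1 = 0"
    "coeff (lpoly (complexify4 (gG t u)) (mk4 1 U 1 U) (mk4 U U 1 1)) 1 = 0"
    "cpev (complexify4 (gG t u)) (\<lambda>i. (mk4 U U 1 1) i + (mk4 1 U 1 U) i) \<noteq> 0"
    "cpev (complexify4 (gG t u)) (\<lambda>i. (mk4 1 U 1 U) i + (mk4 U U 1 1) i) \<noteq> 0"
proof -
  have u0: "u \<noteq> 0" using g by (simp add: good_def)
  note nz = good_nz[OF g, folded U_def]
  show "coeff (lpoly (complexify4 (gG t u)) (mk4 U U 1 1) (mk4 1 U 1 U)) 1 = 0"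
    unfolding U_def lp_P2_P3[OF u0] by simp
  show "coeff (lpoly (complexify4 (gG t u)) (mk4 1 U 1 U) (mk4 U U 1 1)) 1 = 0"
    unfolding U_def lp_P3_P2[OF u0] by simp
  have "cpev (complexify4 (gG t u)) (\<lambda>i. (mk4 U U 1 1) i + (mk4 1 U 1 U) i) = FF (complex_of_real t) U (U + 1) (U + U) (1 + 1) (1 + U)"
    by (simp add: cpev_complexify cev_gG[OF u0] U_def)
  also have "\<dots> = 2*(U-1)^4*((complex_of_real t)*U+U-2)^2*((complex_of_real t)+1-2*U)^2"
    by (rule ffsum_P2_P3)
  finally show "cpev (complexify4 (gG t u)) (\<lambda>i. (mk4 U U 1 1) i + (mk4 1 U 1 U) i) \<noteq> 0"
    using nz by simp
  then show "cpev (complexify4 (gG t u)) (\<lambda>i. (mk4 1 U 1 U) i + (mk4 U U 1 1) i) \<noteq> 0"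
    by (simp add: add.commute)
qed



lemma hom4_complexify: "is_form4 k p \<Longrightarrow> hom4 k (complexify4 p)"
  by (simp add: is_form4_def hom4_def keys_complexify)

lemma complexify_nz: "p \<noteq> 0 \<Longrightarrow> complexify4 p \<noteq> 0"
  by (metis keys_complexify keys_eq_empty)

lemma hom4_one: "hom4 0 1"
  by (simp add: hom4_def)

lemma hom4_unique:
  assumes "hom4 k a" "hom4 j a" "a \<noteq> 0" shows "k = j"
proof -
  obtain m where m: "m \<in> Poly_Mapping.keys a" using assms(3) by (metis keys_eq_empty equals0I)
  have "(\<Sum>i\<in>UNIV. Poly_Mapping.lookup m i) = k" using assms(1) m by (simp add: hom4_def)
  moreover have "(\<Sum>i\<in>UNIV. Poly_Mapping.lookup m i) = j" using assms(2) m by (simp add: hom4_def)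
  ultimately show ?thesis by simp
qed

lemma irreducible_main:
  fixes t u :: real
  assumes g: "good t u" and P: "gG t u \<in> P44" and nz: "gG t u \<noteq> 0"
  shows "irreducible (complexify4 (gG t u))"
proof -
  define F where "F = complexify4 (gG t u)"
  define U where "U = complex_of_real u"
  have homF: "hom4 4 F" using P unfolding F_def P44_def by (simp add: hom4_complexify)
  have F0: "F \<noteq> 0" unfolding F_def using nz by (rule complexify_nz)
  have z1: "cpev F (mk4 1 1 U U) = 0" unfolding F_def U_def by (rule fzero_P1[OF g])
  have z2: "cpev F (mk4 U U 1 1) = 0" unfolding F_def U_def by (rule fzero_P2[OF g])
  have z3: "cpev F (mk4 1 U 1 U) = 0" unfolding F_def U_def by (rule fzero_P3[OF g])
  note p12 = pairfacts_P1_P2[OF g, folded F_def U_def]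
  note p13 = pairfacts_P1_P3[OF g, folded F_def U_def]
  note p23 = pairfacts_P2_P3[OF g, folded F_def U_def]
  have "irreducible F"
  proof (rule irreducibleI)
    show "F \<noteq> 0" by (rule F0)
    show "\<not> F dvd 1"
    proof
      assume "F dvd 1"
      then obtain g where "1 = F * g" by (rule dvdE)
      then obtain k where "k \<le> 0" "hom4 k F" using factor_hom[of F g 1 0] hom4_one by auto
      then show False using hom4_unique[of 4 F k] homF F0 by simp
    qed
    fix a b assume Fab: "F = a * b"
    then have ab: "a * b = F" ..
    then have ba: "b * a = F" by (simp add: mult.commute)
    obtain k where k: "k \<le> 4" "hom4 k a" "hom4 (4 - k) b" using factor_hom[OF ab F0 homF] by auto
    have a0: "a \<noteq> 0" and b0: "b \<noteq> 0" using F0 Fab by auto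
    show "a dvd 1 \<or> b dvd 1"
    proof (cases "k = 0 \<or> k = 4")
      case True then show ?thesis using hom0_unit a0 b0 k by auto
    next
      case False
      then have k1: "1 \<le> k" "k \<le> 3" and k2: "1 \<le> 4 - k" "4 - k \<le> 3" using k by auto
      have ev: "cpev a P * cpev b P = cpev F P" for P using ab cpev_mult by metis
      have n1: "\<not> (cpev a (mk4 1 1 U U) = 0 \<and> cpev b (mk4 1 1 U U) = 0)"
        using typeI_P1[OF g, of a b] ab unfolding F_def U_def by blast
      have n2: "\<not> (cpev a (mk4 U U 1 1) = 0 \<and> cpev b (mk4 U U 1 1) = 0)"
        using typeI_P2[OF g, of a b] ab unfolding F_def U_def by blast
      have n3: "\<not> (cpev a (mk4 1 U 1 U) = 0 \<and> cpev b (mk4 1 U 1 U) = 0)"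
        using typeI_P3[OF g, of a b] ab unfolding F_def U_def by blast
      have o1: "cpev a (mk4 1 1 U U) = 0 \<or> cpev b (mk4 1 1 U U) = 0" using ev z1 by (metis mult_eq_0_iff)
      have o2: "cpev a (mk4 U U 1 1) = 0 \<or> cpev b (mk4 U U 1 1) = 0" using ev z2 by (metis mult_eq_0_iff)
      have o3: "cpev a (mk4 1 U 1 U) = 0 \<or> cpev b (mk4 1 U 1 U) = 0" using ev z3 by (metis mult_eq_0_iff)
      have False
      proof (cases "cpev a (mk4 1 1 U U) = 0")
        case A1: True
        show False
        proof (cases "cpev a (mk4 U U 1 1) = 0")
          case True
          show False by (rule pair_contra[OF ab k(2) k1 A1 True]) (use n1 n2 A1 True p12 in auto)
        next
          case A2: False
          show False
          proof (cases "cpev a (mk4 1 U 1 U) = 0")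
            case True
            show False by (rule pair_contra[OF ab k(2) k1 A1 True]) (use n1 n3 A1 True p13 in auto)
          next
            case False
            show False by (rule pair_contra[OF ba k(3) k2]) (use o2 o3 n2 n3 A2 False p23 in auto)
          qed
        qed
      next
        case B1: False
        show False
        proof (cases "cpev a (mk4 U U 1 1) = 0")
          case A2: True
          show False
          proof (cases "cpev a (mk4 1 U 1 U) = 0")
            case True
            show False by (rule pair_contra[OF ab k(2) k1 A2 True]) (use n2 n3 A2 True p23 in auto)
          next
            case False
            show False by (rule pair_contra[OF ba k(3) k2]) (use o1 o3 n1 n3 B1 False p13 in auto)
          qed
        next
          case False
          show False by (rule pair_contra[OF ba k(3) k2]) (use o1 o2 n1 n2 B1 False p12 in auto)
        qed
      qed
      then show ?thesis ..
    qed
  qed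
  then show ?thesis by (simp add: F_def)
qed



lemma peval4_hext: "peval4 p x = hext id (meval x) p"
  by (simp add: peval4_def hext_def meval_def)

lemma peval4_add: "peval4 (p + q) x = peval4 p x + peval4 q x"
  unfolding peval4_hext by (rule hext_add) simp_all

lemma peval4_mult: "peval4 (p * q) x = peval4 p x * peval4 q x"
  unfolding peval4_hext by (rule hext_mult) (simp_all add: meval_add)

lemma peval4_zero: "peval4 0 x = 0"
  by (simp add: peval4_def)

lemma form_mult:
  assumes "is_form4 j p" "is_form4 k q" shows "is_form4 (j + k) (p * q)"
  unfolding is_form4_def
proof
  fix m assume "m \<in> Poly_Mapping.keys (p * q)"
  then obtain m1 m2 where "m = m1 + m2" "m1 \<in> Poly_Mapping.keys p" "m2 \<in> Poly_Mapping.keys q"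
    using keys_mult by blast
  then show "(\<Sum>i\<in>UNIV. Poly_Mapping.lookup m i) = j + k"
    using assms by (simp add: is_form4_def lookup_add sum.distrib)
qed

lemma form_add:
  assumes "is_form4 k p" "is_form4 k q" shows "is_form4 k (p + q)"
  using assms keys_add[of p q] unfolding is_form4_def by blast

lemma form_zero: "is_form4 k 0"
  by (simp add: is_form4_def)

lemma sos_form: "(\<forall>q\<in>set qs. is_form4 2 q) \<Longrightarrow> is_form4 4 (sum_list (map (\<lambda>q. q * q) qs))"
  by (induction qs) (auto simp: form_zero intro!: form_add form_mult[of 2 _ 2, simplified])

lemma sos_nonneg: "peval4 (sum_list (map (\<lambda>q. q * q) qs)) x \<ge> 0"
  by (induction qs) (simp_all add: peval4_zero peval4_add peval4_mult)

lemma cpev_Const: "cpev (complexify4 (Const4 c)) z = complex_of_real c"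
  by (simp add: cpev_complexify cev_Const)

lemma not_sos:
  fixes t u :: real
  assumes g: "good t u" and ext: "extremal_P44 (gG t u)"
  shows "gG t u \<notin> Sigma44"
proof
  assume "gG t u \<in> Sigma44"
  then obtain qs where qs: "\<forall>q\<in>set qs. is_form4 2 q" and f: "gG t u = sum_list (map (\<lambda>q. q * q) qs)"
    unfolding Sigma44_def by blast
  have nz: "gG t u \<noteq> 0" and ex: "\<And>g h. g \<in> P44 \<Longrightarrow> h \<in> P44 \<Longrightarrow> gG t u = g + h \<Longrightarrow> \<exists>l\<ge>0. g = Const4 l * gG t u"
    using ext unfolding extremal_P44_def by blast+
  obtain q where q: "q \<in> set qs" "q * q \<noteq> 0"
  proof -
    have "\<exists>q\<in>set qs. q * q \<noteq> 0"
    proof (rule ccontr)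
      assume "\<not> ?thesis"
      then have "sum_list (map (\<lambda>q. q * q) qs) = 0" by (induction qs) auto
      then show False using f nz by simp
    qed
    then show ?thesis using that by blast
  qed
  define h where "h = sum_list (map (\<lambda>q. q * q) (remove1 q qs))"
  have fgh: "gG t u = q * q + h" unfolding h_def f using q(1) by (rule sum_list_map_remove1)
  have gP: "q * q \<in> P44"
    unfolding P44_def using qs q(1) form_mult[of 2 q 2 q] by (auto simp: peval4_mult)
  have hP: "h \<in> P44"
    unfolding P44_def h_def using qs sos_form[of "remove1 q qs"] sos_nonneg
    by (auto dest: set_remove1_subset[THEN subsetD])
  obtain l where l: "l \<ge> 0" "q * q = Const4 l * gG t u" using ex[OF gP hP fgh] by blast
  have l0: "l \<noteq> 0" using l q(2) by (auto simp: Const4_def)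
  have "Const4 (1 / l) * (q * q) = Const4 (1/l) * Const4 l * gG t u" using l by (simp add: mult.assoc)
  also have "Const4 (1/l) * Const4 l = (1 :: mono4 \<Rightarrow>\<^sub>0 real)"
    using l0 by (simp add: Const4_def mult_single)
  finally have fq: "gG t u = (Const4 (1/l) * q) * q" by (simp add: mult.assoc)
  define U where "U = complex_of_real u"
  define a where "a = complexify4 (Const4 (1/l) * q)"
  define b where "b = complexify4 q"
  have ab: "a * b = complexify4 (gG t u)" unfolding a_def b_def fq by (simp add: complexify_mult)
  have ea: "cpev a P = complex_of_real (1/l) * cpev b P" for P
    unfolding a_def b_def by (simp add: complexify_mult cpev_mult cpev_Const)
  have "cpev a (mk4 1 1 U U) * cpev b (mk4 1 1 U U) = 0"
    using fzero_P1[OF g] ab cpev_mult unfolding U_def by metis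
  then have "complex_of_real (1/l) * cpev b (mk4 1 1 U U) ^ 2 = 0"
    by (simp add: ea power2_eq_square mult.assoc)
  then have zb: "cpev b (mk4 1 1 U U) = 0" using l0 by simp
  then have za: "cpev a (mk4 1 1 U U) = 0" by (simp add: ea)
  show False using typeI_P1[OF g ab] za zb unfolding U_def by blast
qed

theorem theorem2p6:
  fixes t u :: real
  assumes "t \<noteq> 1"
    and "u \<notin> {0, 1, -1}"
    and "VF t (omega u) > 0"
    and "extremal_P44 (gG t u)"
  shows "irreducible (complexify4 (gG t u)) \<and> gG t u \<notin> Sigma44"
proof -
  have g: "good t u"
    using assms(1,2) VF_VV[of u t] assms(3) unfolding good_def by auto
  have P: "gG t u \<in> P44" and nz: "gG t u \<noteq> 0" using assms(4) unfolding extremal_P44_def by auto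
  show ?thesis using irreducible_main[OF g P nz] not_sos[OF g assms(4)] by blast
qed


end
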